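(* Let $(\mathcal S,\mathcal Q,\Theta)$ be a Pufferfish scenario, $f:\mathcal X\to\mathbb R^d$ a query, and $\omega$ a continuous slice distribution on $\mathbb S^{d-1}$. Draw i.i.d. directions $U_1,\dots,U_m\sim\omega$. Assume $0\le\Delta^u_\infty\le\Delta_0$ for all $u$. Fix $\alpha>1$, $\varepsilon>0$, $\gamma\in(0,1)$. Let $\widehat\Delta_\infty(U_\ell)$, $\ell\in[m]$, be random quantities satisfying $\Pr(\Delta^{U_\ell}_\infty\le\widehat\Delta_\infty(U_\ell)\text{ for all }\ell\in[m])\ge1-\gamma/2$, where the probability is over the conditional sampling used to form the $\widehat\Delta_\infty(U_\ell)$. If the Gaussian mechanism uses $N\sim\mathcal N(0,\sigma^2I_d)$ (independent of $X$) with \[ \sigma^2\ge\frac{\alpha}{2\varepsilon}\left(\frac1m\sum_{\ell=1}^m(\widehat\Delta_\infty(U_\ell))^2+\Delta_0^2\sqrt{\frac{\log(4/\gamma)}{2m}}\right), \] then with probability at least $1-\gamma$ (over both the conditional sampling and the draw of $U_{1:m}$), $\mathcal M(X)=f(X)+N$ satisfies $(\alpha,\varepsilon,\omega)$-Ave-SRPP in $(\mathcal S,\mathcal Q,\Theta)$.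
   Context: Pufferfish scenario: secrets $\mathcal S$, pairs $\mathcal Q\subseteq\mathcal S\times\mathcal S$, priors $\Theta$; each $\theta$ is a joint law of secret $S$ and dataset $X$, with secret marginal $P^S_\theta$. $P^{f,s}_\theta$ is the law of $f(X)$ given $S=s$ under $\theta$; $\mathcal M^\theta_s$ the law of $\mathcal M(X)$ given $S=s$ under $\theta$. $\mathbb S^{d-1}$ is the unit sphere, $\Psi^u(a)=\langle a,u\rangle$, $\Psi^u_\#$ pushforward. $W_\infty(\nu,\mu)=\inf_{\pi\in\Pi(\nu,\mu)}\sup_{(x,y)\in\mathrm{supp}\,\pi}|x-y|$ for measures on $\mathbb R$. $\Delta^u_\infty:=\max_{(s_i,s_j)\in\mathcal Q,\theta\in\Theta}W_\infty(\Psi^u_\#P^{f,s_i}_\theta,\Psi^u_\#P^{f,s_j}_\theta)$. $\mathtt D_\alpha$ is R\'enyi divergence; $\mathtt{AveSD}^\omega_\alpha(P\|Q)=\int\mathtt D_\alpha(\Psi^u_\#P\|\Psi^u_\#Q)\,d\omega(u)$. $\mathcal M$ is $(\alpha,\varepsilon,\omega)$-Ave-SRPP in $(\mathcal S,\mathcal Q,\Theta)$ if $\mathtt{AveSD}^\omega_\alpha(\mathcal M^\theta_{s_i}\|\mathcal M^\theta_{s_j})\le\varepsilon$ for all $\theta\in\Theta$ and $(s_i,s_j)\in\mathcal Q$ with $P^S_\theta(s_i),P^S_\theta(s_j)>0$. *)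

theory Defs
  imports "HOL-Probability.Probability"
begin

definition pufferfish_scenario ::
  "'x measure \<Rightarrow> 's set \<Rightarrow> ('s \<times> 's) set \<Rightarrow> ('s \<times> 'x) measure set \<Rightarrow> bool" where
  "pufferfish_scenario MX Sec Q Th \<longleftrightarrow> Q \<subseteq> Sec \<times> Sec \<and>
     (\<forall>\<theta>\<in>Th. prob_space \<theta> \<and> sets \<theta> = sets (count_space UNIV \<Otimes>\<^sub>M MX)
              \<and> emeasure \<theta> (Sec \<times> space MX) = 1)"

definition sec_prob :: "'x measure \<Rightarrow> ('s \<times> 'x) measure \<Rightarrow> 's \<Rightarrow> real" where
  "sec_prob MX \<theta> s = measure \<theta> ({s} \<times> space MX)"

definition cond_data :: "'x measure \<Rightarrow> ('s \<times> 'x) measure \<Rightarrow> 's \<Rightarrow> 'x measure" where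
  "cond_data MX \<theta> s = measure_of (space MX) (sets MX)
      (\<lambda>A. emeasure \<theta> ({s} \<times> A) / emeasure \<theta> ({s} \<times> space MX))"

definition query_law :: "'x measure \<Rightarrow> ('s \<times> 'x) measure \<Rightarrow> ('x \<Rightarrow> real^'d) \<Rightarrow> 's \<Rightarrow> (real^'d) measure" where
  "query_law MX \<theta> f s = distr (cond_data MX \<theta> s) borel f"

definition proj :: "real^'d \<Rightarrow> (real^'d) measure \<Rightarrow> real measure" where
  "proj u P = distr P borel (\<lambda>a. a \<bullet> u)"

definition couplings :: "real measure \<Rightarrow> real measure \<Rightarrow> (real \<times> real) measure set" where
  "couplings \<nu> \<mu> = {\<pi>. prob_space \<pi> \<and> sets \<pi> = sets (borel \<Otimes>\<^sub>M borel)
       \<and> distr \<pi> borel fst = \<nu> \<and> distr \<pi> borel snd = \<mu>}"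

definition msupport :: "'a::topological_space measure \<Rightarrow> 'a set" where
  "msupport M = {z. \<forall>U. open U \<longrightarrow> z \<in> U \<longrightarrow> 0 < emeasure M U}"

definition W_inf :: "real measure \<Rightarrow> real measure \<Rightarrow> ereal" where
  "W_inf \<nu> \<mu> = (INF \<pi> \<in> couplings \<nu> \<mu>. SUP z \<in> msupport \<pi>. ereal \<bar>fst z - snd z\<bar>)"

text \<open>Delta^u_infty (max over pairs in Q and priors, restricted to secrets of positive
  prior probability, for which the conditional laws are defined).\<close>
definition Delta_inf ::
  "'x measure \<Rightarrow> ('s \<times> 's) set \<Rightarrow> ('s \<times> 'x) measure set \<Rightarrow> ('x \<Rightarrow> real^'d) \<Rightarrow> real^'d \<Rightarrow> ereal" where
  "Delta_inf MX Q Th f u =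
     (SUP p \<in> {(si, sj, \<theta>). (si, sj) \<in> Q \<and> \<theta> \<in> Th \<and> sec_prob MX \<theta> si > 0 \<and> sec_prob MX \<theta> sj > 0}.
        (case p of (si, sj, \<theta>) \<Rightarrow>
           W_inf (proj u (query_law MX \<theta> f si)) (proj u (query_law MX \<theta> f sj))))"

definition renyi_div :: "real \<Rightarrow> real measure \<Rightarrow> real measure \<Rightarrow> ennreal" where
  "renyi_div \<alpha> P Q =
     (let I = (\<integral>\<^sup>+ x. ennreal ((enn2real (RN_deriv Q P x)) powr \<alpha>) \<partial>Q)
      in if absolutely_continuous Q P \<and> I \<noteq> \<infinity>
         then ennreal (ln (enn2real I) / (\<alpha> - 1)) else \<infinity>)"

definition ave_sd :: "real \<Rightarrow> (real^'d) measure \<Rightarrow> (real^'d) measure \<Rightarrow> (real^'d) measure \<Rightarrow> ennreal" where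
  "ave_sd \<alpha> \<omega> P Q = (\<integral>\<^sup>+ u. renyi_div \<alpha> (proj u P) (proj u Q) \<partial>\<omega>)"

text \<open>A mechanism is represented by its conditional output laws Mlaw theta s.\<close>
definition ave_srpp ::
  "real \<Rightarrow> real \<Rightarrow> (real^'d) measure \<Rightarrow> 'x measure \<Rightarrow> ('s \<times> 's) set \<Rightarrow> ('s \<times> 'x) measure set
    \<Rightarrow> (('s \<times> 'x) measure \<Rightarrow> 's \<Rightarrow> (real^'d) measure) \<Rightarrow> bool" where
  "ave_srpp \<alpha> \<epsilon> \<omega> MX Q Th Mlaw \<longleftrightarrow>
     (\<forall>\<theta>\<in>Th. \<forall>(si, sj)\<in>Q. sec_prob MX \<theta> si > 0 \<longrightarrow> sec_prob MX \<theta> sj > 0 \<longrightarrow>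
        ave_sd \<alpha> \<omega> (Mlaw \<theta> si) (Mlaw \<theta> sj) \<le> ennreal \<epsilon>)"

definition gauss_vec :: "real \<Rightarrow> (real^'d) measure" where
  "gauss_vec \<sigma> = density lborel (\<lambda>z. ennreal (\<Prod>i\<in>UNIV. normal_density 0 \<sigma> (z $ i)))"

definition gauss_mech_law ::
  "'x measure \<Rightarrow> ('x \<Rightarrow> real^'d) \<Rightarrow> real \<Rightarrow> ('s \<times> 'x) measure \<Rightarrow> 's \<Rightarrow> (real^'d) measure" where
  "gauss_mech_law MX f \<sigma> \<theta> s =
     distr (cond_data MX \<theta> s \<Otimes>\<^sub>M gauss_vec \<sigma>) borel (\<lambda>(x, n). f x + n)"

definition slice_distribution :: "(real^'d) measure \<Rightarrow> bool" where
  "slice_distribution \<omega> \<longleftrightarrow> prob_space \<omega> \<and> sets \<omega> = sets borel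
     \<and> emeasure \<omega> (sphere 0 1) = 1 \<and> (\<forall>u. emeasure \<omega> {u} = 0)"

end

theory Submission
  imports Defs
begin

lemma tangent_powr:
  fixes t r \<alpha> :: real
  assumes "\<alpha> > 1" "t \<ge> 0" "r > 0"
  shows "\<alpha> * r powr (\<alpha>-1) * t \<le> t powr \<alpha> + (\<alpha>-1) * r powr \<alpha>"
proof -
  define q where "q = \<alpha> / (\<alpha> - 1)"
  have q1: "q > 1" using assms unfolding q_def by (simp add: field_simps)
  have pq: "1/\<alpha> + 1/q = 1" using assms unfolding q_def by (simp add: field_simps)
  have "t * r powr (\<alpha>-1) \<le> t powr \<alpha> / \<alpha> + (r powr (\<alpha>-1)) powr q / q"
    using Youngs_inequality[OF assms(1) q1 pq assms(2)] assms by simp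
  also have "(r powr (\<alpha>-1)) powr q = r powr \<alpha>"
    using assms by (simp add: powr_powr q_def)
  finally have "t * r powr (\<alpha>-1) \<le> t powr \<alpha> / \<alpha> + r powr \<alpha> / q" .
  then have "\<alpha> * (t * r powr (\<alpha>-1)) \<le> \<alpha> * (t powr \<alpha> / \<alpha> + r powr \<alpha> / q)"
    using assms by (intro mult_left_mono) auto
  also have "\<dots> = t powr \<alpha> + (\<alpha>-1) * r powr \<alpha>"
    using assms by (simp add: q_def field_simps)
  finally show ?thesis by (simp add: mult_ac)
qed

lemma gauss_powr_identity:
  fixes x y z \<sigma> \<alpha> :: real
  assumes "\<sigma> > 0"
  shows "normal_density x \<sigma> z powr \<alpha> * normal_density y \<sigma> z powr (1-\<alpha>)
       = exp (\<alpha>*(\<alpha>-1)*(x-y)\<^sup>2/(2*\<sigma>\<^sup>2)) * normal_density (\<alpha>*x + (1-\<alpha>)*y) \<sigma> z"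
proof -
  define s where "s = sqrt (2*pi*\<sigma>\<^sup>2)"
  have s: "s > 0" using assms by (simp add: s_def)
  have nd: "normal_density m \<sigma> z = exp (-(z-m)\<^sup>2/(2*\<sigma>\<^sup>2) - ln s)" for m
    using s by (simp add: normal_density_def s_def exp_diff)
  have id: "\<alpha>*(z-x)\<^sup>2 + (1-\<alpha>)*(z-y)\<^sup>2 = (z-(\<alpha>*x + (1-\<alpha>)*y))\<^sup>2 + \<alpha>*(1-\<alpha>)*(x-y)\<^sup>2"
    by (simp add: power2_eq_square algebra_simps)
  have "normal_density x \<sigma> z powr \<alpha> * normal_density y \<sigma> z powr (1-\<alpha>)
      = exp (\<alpha> * (-(z-x)\<^sup>2/(2*\<sigma>\<^sup>2) - ln s) + (1-\<alpha>) * (-(z-y)\<^sup>2/(2*\<sigma>\<^sup>2) - ln s))"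
    by (simp add: nd powr_def exp_add)
  also have "\<alpha> * (-(z-x)\<^sup>2/(2*\<sigma>\<^sup>2) - ln s) + (1-\<alpha>) * (-(z-y)\<^sup>2/(2*\<sigma>\<^sup>2) - ln s)
      = -(\<alpha>*(z-x)\<^sup>2 + (1-\<alpha>)*(z-y)\<^sup>2)/(2*\<sigma>\<^sup>2) - ln s"
    using assms by (simp add: field_simps)
  also have "\<dots> = \<alpha>*(\<alpha>-1)*(x-y)\<^sup>2/(2*\<sigma>\<^sup>2) + (-(z-(\<alpha>*x + (1-\<alpha>)*y))\<^sup>2/(2*\<sigma>\<^sup>2) - ln s)"
    unfolding id using assms by (simp add: field_simps)
  finally show ?thesis by (simp add: nd exp_add)
qed

lemma gauss_renyi_integral:
  fixes x y \<sigma> \<alpha> :: real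
  assumes "\<sigma> > 0"
  shows "(\<integral>\<^sup>+z. ennreal (normal_density x \<sigma> z powr \<alpha> * normal_density y \<sigma> z powr (1-\<alpha>)) \<partial>lborel)
       = ennreal (exp (\<alpha>*(\<alpha>-1)*(x-y)\<^sup>2/(2*\<sigma>\<^sup>2)))"
proof -
  have "(\<integral>\<^sup>+z. ennreal (normal_density x \<sigma> z powr \<alpha> * normal_density y \<sigma> z powr (1-\<alpha>)) \<partial>lborel)
     = (\<integral>\<^sup>+z. ennreal (exp (\<alpha>*(\<alpha>-1)*(x-y)\<^sup>2/(2*\<sigma>\<^sup>2))) * ennreal (normal_density (\<alpha>*x + (1-\<alpha>)*y) \<sigma> z) \<partial>lborel)"
    using assms by (intro nn_integral_cong) (simp add: gauss_powr_identity ennreal_mult)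
  also have "\<dots> = ennreal (exp (\<alpha>*(\<alpha>-1)*(x-y)\<^sup>2/(2*\<sigma>\<^sup>2))) * (\<integral>\<^sup>+z. ennreal (normal_density (\<alpha>*x + (1-\<alpha>)*y) \<sigma> z) \<partial>lborel)"
    by (rule nn_integral_cmult) simp
  also have "(\<integral>\<^sup>+z. ennreal (normal_density (\<alpha>*x + (1-\<alpha>)*y) \<sigma> z) \<partial>lborel) = 1"
    using assms by (subst nn_integral_eq_integral) (auto simp: integrable_normal_density integral_normal_density)
  finally show ?thesis by simp
qed

lemma normal_density_le: "\<sigma> > 0 \<Longrightarrow> normal_density m \<sigma> z \<le> 1 / sqrt (2*pi*\<sigma>\<^sup>2)"
  by (simp add: normal_density_def divide_right_mono)

lemma measurable_normal_density2[measurable (raw)]: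
  assumes [measurable]: "f \<in> borel_measurable M" "g \<in> borel_measurable M"
  shows "(\<lambda>x. normal_density (f x) \<sigma> (g x)) \<in> borel_measurable M"
proof -
  have c: "(\<lambda>x. 2 * \<sigma>\<^sup>2) \<in> borel_measurable M" by simp
  show ?thesis unfolding normal_density_def using c by measurable
qed

lemma powr_ratio_id1:
  fixes a b \<alpha> :: real assumes "a > 0" "b > 0"
  shows "(a/b) powr (\<alpha>-1) * a = a powr \<alpha> * b powr (1-\<alpha>)"
proof -
  have "(a/b) powr (\<alpha>-1) * a = exp ((\<alpha>-1) * (ln a - ln b) + ln a)"
    using assms by (simp add: powr_def ln_div exp_add)
  also have "\<dots> = exp (\<alpha> * ln a + (1-\<alpha>) * ln b)" by (simp add: algebra_simps)
  also have "\<dots> = a powr \<alpha> * b powr (1-\<alpha>)" using assms by (simp add: powr_def exp_add)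
  finally show ?thesis .
qed

lemma powr_ratio_id2:
  fixes a b \<alpha> :: real assumes "a > 0" "b > 0"
  shows "(a/b) powr \<alpha> * b = a powr \<alpha> * b powr (1-\<alpha>)"
proof -
  have "(a/b) powr \<alpha> * b = exp (\<alpha> * (ln a - ln b) + ln b)"
    using assms by (simp add: powr_def ln_div exp_add)
  also have "\<dots> = exp (\<alpha> * ln a + (1-\<alpha>) * ln b)" by (simp add: algebra_simps)
  also have "\<dots> = a powr \<alpha> * b powr (1-\<alpha>)" using assms by (simp add: powr_def exp_add)
  finally show ?thesis .
qed

lemma tangent2:
  fixes a b r \<alpha> :: real
  assumes "\<alpha> > 1" "a \<ge> 0" "b > 0" "r > 0"
  shows "\<alpha> * r powr (\<alpha>-1) * a \<le> a powr \<alpha> * b powr (1-\<alpha>) + (\<alpha>-1) * r powr \<alpha> * b"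
proof -
  have "\<alpha> * r powr (\<alpha>-1) * (a/b) \<le> (a/b) powr \<alpha> + (\<alpha>-1) * r powr \<alpha>"
    using assms by (intro tangent_powr) auto
  then have "(\<alpha> * r powr (\<alpha>-1) * (a/b)) * b \<le> ((a/b) powr \<alpha> + (\<alpha>-1) * r powr \<alpha>) * b"
    using assms by (intro mult_right_mono) auto
  also have "((a/b) powr \<alpha> + (\<alpha>-1) * r powr \<alpha>) * b = (a/b) powr \<alpha> * b + (\<alpha>-1) * r powr \<alpha> * b"
    by (simp add: algebra_simps)
  also have "(a/b) powr \<alpha> * b = a powr \<alpha> * b powr (1-\<alpha>)"
  proof (cases "a = 0")
    case True then show ?thesis by simp
  next
    case False then show ?thesis using assms powr_ratio_id2[of a b \<alpha>] by simp
  qed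
  finally show ?thesis using assms by simp
qed

lemma renyi_coupling_bound:
  fixes \<pi> :: "(real \<times> real) measure" and \<sigma> \<alpha> D :: real
  assumes sig: "\<sigma> > 0" and alpha: "\<alpha> > 1" and pi: "prob_space \<pi>"
    and sets_pi[measurable_cong]: "sets \<pi> = sets (borel \<Otimes>\<^sub>M borel)"
    and D: "D \<ge> 0" and AEd: "AE w in \<pi>. \<bar>fst w - snd w\<bar> \<le> D"
  shows "renyi_div \<alpha> (density lborel (\<lambda>z. \<integral>\<^sup>+w. ennreal (normal_density (fst w) \<sigma> z) \<partial>\<pi>))
                      (density lborel (\<lambda>z. \<integral>\<^sup>+w. ennreal (normal_density (snd w) \<sigma> z) \<partial>\<pi>))
         \<le> ennreal (\<alpha> * D\<^sup>2 / (2*\<sigma>\<^sup>2))"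
proof -
  interpret pi: prob_space \<pi> by fact
  interpret pair_sigma_finite lborel \<pi> by unfold_locales
  define p where "p = (\<lambda>z. \<integral>\<^sup>+w. ennreal (normal_density (fst w) \<sigma> z) \<partial>\<pi>)"
  define q where "q = (\<lambda>z. \<integral>\<^sup>+w. ennreal (normal_density (snd w) \<sigma> z) \<partial>\<pi>)"
  define c where "c = 1 / sqrt (2*pi*\<sigma>\<^sup>2)"
  have p_meas[measurable]: "p \<in> borel_measurable lborel" unfolding p_def by measurable
  have q_meas[measurable]: "q \<in> borel_measurable lborel" unfolding q_def by measurable
  have bnd: "(\<integral>\<^sup>+w. ennreal (normal_density (g w) \<sigma> z) \<partial>\<pi>) \<le> ennreal c" for g z
  proof -
    have "(\<integral>\<^sup>+w. ennreal (normal_density (g w) \<sigma> z) \<partial>\<pi>) \<le> (\<integral>\<^sup>+w. ennreal c \<partial>\<pi>)"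
      using sig by (intro nn_integral_mono) (simp add: c_def normal_density_le)
    also have "\<dots> = ennreal c" by (simp add: pi.emeasure_space_1)
    finally show ?thesis .
  qed
  have pos: "(\<integral>\<^sup>+w. ennreal (normal_density (g w) \<sigma> z) \<partial>\<pi>) > 0"
    if [measurable]: "g \<in> borel_measurable \<pi>" for g z
  proof (rule ccontr)
    assume "\<not> ?thesis"
    then have "(\<integral>\<^sup>+w. ennreal (normal_density (g w) \<sigma> z) \<partial>\<pi>) = 0" by simp
    then have "AE w in \<pi>. ennreal (normal_density (g w) \<sigma> z) = 0"
      by (subst (asm) nn_integral_0_iff_AE) auto
    then have "AE w in \<pi>. False"
      by (rule eventually_mono) (metis ennreal_eq_0_iff normal_density_pos sig not_le)
    then show False by simp
  qed
  have p_pos: "p z > 0" for z unfolding p_def by (rule pos) measurable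
  have q_pos: "q z > 0" for z unfolding q_def by (rule pos) measurable
  have p_le: "p z \<le> ennreal c" for z unfolding p_def by (rule bnd)
  have q_le: "q z \<le> ennreal c" for z unfolding q_def by (rule bnd)
  have p_fin: "p z < top" for z using p_le[of z] by (simp add: le_less_trans)
  have q_fin: "q z < top" for z using q_le[of z] by (simp add: le_less_trans)
  define pr where "pr z = enn2real (p z)" for z
  define qr where "qr z = enn2real (q z)" for z
  have p_eq: "p z = ennreal (pr z)" for z using p_fin[of z] by (simp add: pr_def)
  have q_eq: "q z = ennreal (qr z)" for z using q_fin[of z] by (simp add: qr_def)
  have pr_pos: "pr z > 0" for z using p_pos[of z] p_eq[of z] by (simp add: ennreal_less_zero_iff)
  have qr_pos: "qr z > 0" for z using q_pos[of z] q_eq[of z] by (simp add: ennreal_less_zero_iff)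
  have nd_int: "(\<integral>\<^sup>+z. ennreal (normal_density m \<sigma> z) \<partial>lborel) = 1" for m
    using sig by (subst nn_integral_eq_integral) (auto simp: integrable_normal_density integral_normal_density)
  have Qint: "(\<integral>\<^sup>+z. q z \<partial>lborel) = 1"
  proof -
    have "(\<integral>\<^sup>+z. q z \<partial>lborel) = (\<integral>\<^sup>+w. (\<integral>\<^sup>+z. ennreal (normal_density (snd w) \<sigma> z) \<partial>lborel) \<partial>\<pi>)"
      unfolding q_def by (rule Fubini'[symmetric]) measurable
    also have "\<dots> = 1" by (simp add: nd_int pi.emeasure_space_1)
    finally show ?thesis .
  qed
  let ?P = "density lborel p" and ?Q = "density lborel q"
  interpret Q: prob_space ?Q
    by (rule prob_spaceI) (simp add: emeasure_density Qint space_borel)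
  define h where "h z = p z / q z" for z
  have h_meas[measurable]: "h \<in> borel_measurable lborel" unfolding h_def by measurable
  have PQ: "density ?Q h = ?P"
  proof -
    have "density ?Q h = density lborel (\<lambda>z. q z * h z)"
      by (rule density_density_eq) auto
    also have "(\<lambda>z. q z * h z) = p"
    proof
      fix z
      have "q z * h z = p z * q z / q z" by (simp add: h_def ennreal_times_divide mult.commute)
      also have "\<dots> = p z" using q_pos[of z] q_fin[of z] by (intro ennreal_mult_divide_eq) auto
      finally show "q z * h z = p z" .
    qed
    finally show ?thesis .
  qed
  have h_eq: "h z = ennreal (pr z / qr z)" for z
    using pr_pos[of z] qr_pos[of z] by (simp add: h_def p_eq q_eq divide_ennreal)
  have AE_RN: "AE z in ?Q. h z = RN_deriv ?Q ?P z"
    by (rule Q.RN_deriv_unique[OF _ PQ]) (simp add: measurable_density_eq1)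
  define I where "I = (\<integral>\<^sup>+ z. ennreal ((enn2real (RN_deriv ?Q ?P z)) powr \<alpha>) \<partial>?Q)"
  define X where "X z = pr z powr \<alpha> * qr z powr (1-\<alpha>)" for z
  have X_pos: "X z > 0" for z using pr_pos[of z] qr_pos[of z] by (simp add: X_def)
  have I_eq: "I = (\<integral>\<^sup>+ z. ennreal (X z) \<partial>lborel)"
  proof -
    have "I = (\<integral>\<^sup>+ z. ennreal ((enn2real (h z)) powr \<alpha>) \<partial>?Q)"
      unfolding I_def by (rule nn_integral_cong_AE) (use AE_RN in \<open>auto elim!: eventually_mono\<close>)
    also have "\<dots> = (\<integral>\<^sup>+ z. q z * ennreal ((enn2real (h z)) powr \<alpha>) \<partial>lborel)"
      by (rule nn_integral_density) measurable
    also have "\<dots> = (\<integral>\<^sup>+ z. ennreal (X z) \<partial>lborel)"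
    proof (rule nn_integral_cong)
      fix z
      have "q z * ennreal ((enn2real (h z)) powr \<alpha>) = ennreal (qr z * (pr z / qr z) powr \<alpha>)"
        using pr_pos[of z] qr_pos[of z] by (simp add: q_eq h_eq ennreal_mult)
      also have "qr z * (pr z / qr z) powr \<alpha> = X z"
        using powr_ratio_id2[OF pr_pos[of z] qr_pos[of z], of \<alpha>] by (simp add: X_def mult.commute)
      finally show "q z * ennreal ((enn2real (h z)) powr \<alpha>) = ennreal (X z)" .
    qed
    finally show ?thesis .
  qed
  define G where "G z = (\<integral>\<^sup>+w. ennreal (normal_density (fst w) \<sigma> z powr \<alpha> * normal_density (snd w) \<sigma> z powr (1-\<alpha>)) \<partial>\<pi>)" for z
  have XG: "ennreal (X z) \<le> G z" for z
  proof -
    define r where "r = pr z / qr z"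
    have r: "r > 0" using pr_pos[of z] qr_pos[of z] by (simp add: r_def)
    have "ennreal (\<alpha> * r powr (\<alpha>-1)) * p z = (\<integral>\<^sup>+w. ennreal (\<alpha> * r powr (\<alpha>-1) * normal_density (fst w) \<sigma> z) \<partial>\<pi>)"
      unfolding p_def using alpha r by (subst nn_integral_cmult[symmetric]) (auto simp: ennreal_mult)
    also have "\<dots> \<le> (\<integral>\<^sup>+w. ennreal (normal_density (fst w) \<sigma> z powr \<alpha> * normal_density (snd w) \<sigma> z powr (1-\<alpha>))
                   + ennreal ((\<alpha>-1) * r powr \<alpha>) * ennreal (normal_density (snd w) \<sigma> z) \<partial>\<pi>)"
    proof (rule nn_integral_mono)
      fix w
      have "\<alpha> * r powr (\<alpha>-1) * normal_density (fst w) \<sigma> z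
            \<le> normal_density (fst w) \<sigma> z powr \<alpha> * normal_density (snd w) \<sigma> z powr (1-\<alpha>) + (\<alpha>-1) * r powr \<alpha> * normal_density (snd w) \<sigma> z"
        using alpha r sig by (intro tangent2) (auto simp: normal_density_pos)
      then show "ennreal (\<alpha> * r powr (\<alpha>-1) * normal_density (fst w) \<sigma> z)
           \<le> ennreal (normal_density (fst w) \<sigma> z powr \<alpha> * normal_density (snd w) \<sigma> z powr (1-\<alpha>))
              + ennreal ((\<alpha>-1) * r powr \<alpha>) * ennreal (normal_density (snd w) \<sigma> z)"
        using alpha by (simp add: ennreal_mult[symmetric] ennreal_plus[symmetric] del: ennreal_plus)
    qed
    also have "\<dots> = G z + ennreal ((\<alpha>-1) * r powr \<alpha>) * q z"
      unfolding G_def q_def by (subst nn_integral_add) (auto simp: nn_integral_cmult)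
    finally have ineq: "ennreal (\<alpha> * r powr (\<alpha>-1)) * p z \<le> G z + ennreal ((\<alpha>-1) * r powr \<alpha>) * q z" .
    have e1: "\<alpha> * r powr (\<alpha>-1) * pr z = \<alpha> * X z"
      using powr_ratio_id1[OF pr_pos[of z] qr_pos[of z], of \<alpha>] by (simp add: r_def X_def)
    have e2: "(\<alpha>-1) * r powr \<alpha> * qr z = (\<alpha>-1) * X z"
      using powr_ratio_id2[OF pr_pos[of z] qr_pos[of z], of \<alpha>] by (simp add: r_def X_def)
    have ineq2: "ennreal (\<alpha> * X z) \<le> G z + ennreal ((\<alpha>-1) * X z)"
    proof -
      have a: "ennreal (\<alpha> * r powr (\<alpha>-1)) * ennreal (pr z) = ennreal (\<alpha> * X z)"
        unfolding e1[symmetric] using alpha pr_pos[of z] by (subst ennreal_mult[symmetric]) auto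
      have b: "ennreal ((\<alpha>-1) * r powr \<alpha>) * ennreal (qr z) = ennreal ((\<alpha>-1) * X z)"
        unfolding e2[symmetric] using alpha qr_pos[of z] by (subst ennreal_mult[symmetric]) auto
      show ?thesis using ineq unfolding p_eq q_eq a b .
    qed
    show ?thesis
    proof (cases "G z = top")
      case True then show ?thesis by simp
    next
      case False
      then obtain g where g: "G z = ennreal g" "g \<ge> 0" by (cases "G z") auto
      have "ennreal (\<alpha> * X z) \<le> ennreal (g + (\<alpha>-1) * X z)"
        using ineq2 g alpha X_pos[of z] by (simp add: ennreal_plus[symmetric] del: ennreal_plus)
      then have "\<alpha> * X z \<le> g + (\<alpha>-1) * X z"
        using g alpha X_pos[of z] by (subst (asm) ennreal_le_iff) auto
      then have "X z \<le> g" by (simp add: algebra_simps)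
      then show ?thesis using g by simp
    qed
  qed
  define K where "K = exp (\<alpha>*(\<alpha>-1)*D\<^sup>2/(2*\<sigma>\<^sup>2))"
  have IK: "I \<le> ennreal K"
  proof -
    have "I \<le> (\<integral>\<^sup>+z. G z \<partial>lborel)" unfolding I_eq by (rule nn_integral_mono) (rule XG)
    also have "(\<integral>\<^sup>+z. G z \<partial>lborel) = (\<integral>\<^sup>+w. (\<integral>\<^sup>+z. ennreal (normal_density (fst w) \<sigma> z powr \<alpha> * normal_density (snd w) \<sigma> z powr (1-\<alpha>)) \<partial>lborel) \<partial>\<pi>)"
      unfolding G_def by (rule Fubini'[symmetric]) measurable
    also have "\<dots> = (\<integral>\<^sup>+w. ennreal (exp (\<alpha>*(\<alpha>-1)*(fst w - snd w)\<^sup>2/(2*\<sigma>\<^sup>2))) \<partial>\<pi>)"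
      using sig by (simp add: gauss_renyi_integral)
    also have "\<dots> \<le> (\<integral>\<^sup>+w. ennreal K \<partial>\<pi>)"
    proof (rule nn_integral_mono_AE)
      show "AE w in \<pi>. ennreal (exp (\<alpha>*(\<alpha>-1)*(fst w - snd w)\<^sup>2/(2*\<sigma>\<^sup>2))) \<le> ennreal K"
        using AEd
      proof (rule eventually_mono)
        fix w assume "\<bar>fst w - snd w\<bar> \<le> D"
        then have "(fst w - snd w)\<^sup>2 \<le> D\<^sup>2"
          by (metis abs_ge_zero power2_abs power_mono)
        then have "\<alpha>*(\<alpha>-1)*(fst w - snd w)\<^sup>2/(2*\<sigma>\<^sup>2) \<le> \<alpha>*(\<alpha>-1)*D\<^sup>2/(2*\<sigma>\<^sup>2)"
          using alpha sig by (intro divide_right_mono mult_left_mono) auto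
        then show "ennreal (exp (\<alpha>*(\<alpha>-1)*(fst w - snd w)\<^sup>2/(2*\<sigma>\<^sup>2))) \<le> ennreal K"
          unfolding K_def by (intro ennreal_leI) simp
      qed
    qed
    also have "\<dots> = ennreal K" by (simp add: pi.emeasure_space_1)
    finally show ?thesis .
  qed
  have ac: "absolutely_continuous ?Q ?P"
    unfolding PQ[symmetric] by (rule absolutely_continuousI_density) (simp add: measurable_density_eq1)
  have Ifin: "I \<noteq> \<infinity>" using IK by (auto simp: top_unique)
  have lnI: "ln (enn2real I) \<le> \<alpha>*(\<alpha>-1)*D\<^sup>2/(2*\<sigma>\<^sup>2)"
  proof (cases "enn2real I > 0")
    case True
    have "enn2real I \<le> K" using enn2real_mono[OF IK] by (simp add: K_def)
    then have "ln (enn2real I) \<le> ln K" using True by (simp add: K_def del: ln_exp)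
    then show ?thesis by (simp add: K_def)
  next
    case False
    then have "enn2real I = 0" by (simp add: enn2real_nonneg order.antisym not_less)
    then show ?thesis using alpha sig by simp
  qed
  have "ln (enn2real I) / (\<alpha> - 1) \<le> \<alpha> * D\<^sup>2 / (2*\<sigma>\<^sup>2)"
  proof -
    have "ln (enn2real I) / (\<alpha> - 1) \<le> (\<alpha>*(\<alpha>-1)*D\<^sup>2/(2*\<sigma>\<^sup>2)) / (\<alpha> - 1)"
      using lnI alpha by (intro divide_right_mono) auto
    also have "\<dots> = \<alpha> * D\<^sup>2 / (2*\<sigma>\<^sup>2)" using alpha by simp
    finally show ?thesis .
  qed
  then show ?thesis
    unfolding renyi_div_def Let_def p_def[symmetric] q_def[symmetric] I_def[symmetric]
    using ac Ifin by (simp add: ennreal_leI)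
qed

lemma Basis_vec_range: "(Basis :: (real^'d) set) = range (\<lambda>i. axis i 1)"
  by (auto simp: Basis_vec_def)

lemma vec_T_component:
  fixes f :: "real^'d \<Rightarrow> real"
  shows "(\<Sum>b\<in>Basis. f b *\<^sub>R b) $ i = f (axis i 1)"
proof -
  have "(\<Sum>b\<in>Basis. f b *\<^sub>R b) $ i = (\<Sum>b\<in>Basis. f b *\<^sub>R b) \<bullet> axis i 1"
    by (simp add: cart_eq_inner_axis)
  also have "\<dots> = (\<Sum>b\<in>Basis. f b * (b \<bullet> axis i 1))"
    by (simp add: inner_sum_left)
  also have "\<dots> = (\<Sum>b\<in>Basis. if b = axis i 1 then f b else 0)"
    by (intro sum.cong refl) (auto simp: inner_Basis axis_in_Basis_iff)
  also have "\<dots> = f (axis i 1)" by (simp add: axis_in_Basis_iff)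
  finally show ?thesis .
qed

lemma prod_axis_reindex:
  "(\<Prod>i\<in>UNIV. g (axis i (1::real)) :: 'a::comm_monoid_mult) = (\<Prod>b\<in>(Basis :: (real^'d) set). g b)"
proof -
  have inj: "inj (\<lambda>i::'d. axis i (1::real))" by (auto simp: inj_on_def axis_eq_axis)
  show ?thesis unfolding Basis_vec_range by (simp add: prod.reindex[OF inj])
qed

lemma indicator_PiE_prod:
  assumes "f \<in> extensional I" "finite I"
  shows "(indicator (Pi\<^sub>E I A) f :: ennreal) = (\<Prod>i\<in>I. indicator (A i) (f i))"
proof (cases "f \<in> Pi\<^sub>E I A")
  case True then show ?thesis by (auto simp: indicator_def PiE_def intro!: prod.neutral)
next
  case False
  then obtain i where "i \<in> I" "f i \<notin> A i" using assms by (auto simp: PiE_def extensional_def)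
  then show ?thesis using False assms by (auto simp: indicator_def prod_zero_iff intro!: bexI[of _ i])
qed

lemma gauss_vec_eq:
  fixes \<sigma> :: real assumes sig: "\<sigma> > 0"
  shows "(gauss_vec \<sigma> :: (real^'d) measure)
       = distr (PiM Basis (\<lambda>_. density lborel (normal_density 0 \<sigma>))) borel (\<lambda>f. \<Sum>b\<in>Basis. f b *\<^sub>R b)"
proof -
  let ?L = "PiM (Basis :: (real^'d) set) (\<lambda>_. lborel)"
  let ?N = "PiM (Basis :: (real^'d) set) (\<lambda>_. density lborel (normal_density 0 \<sigma>))"
  let ?T = "\<lambda>f. \<Sum>b\<in>(Basis :: (real^'d) set). f b *\<^sub>R b"
  let ?g = "\<lambda>z::real^'d. ennreal (\<Prod>i\<in>UNIV. normal_density 0 \<sigma> (z $ i))"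
  have T_meas[measurable]: "?T \<in> borel_measurable ?L" by measurable
  have g_meas[measurable]: "?g \<in> borel_measurable borel" by measurable
  have "gauss_vec \<sigma> = density (distr ?L borel ?T) ?g"
    unfolding gauss_vec_def by (subst lborel_eq) simp
  also have "\<dots> = distr (density ?L (\<lambda>f. ?g (?T f))) borel ?T"
    by (rule density_distr) measurable
  also have "density ?L (\<lambda>f. ?g (?T f)) = ?N"
  proof -
    interpret ps: product_sigma_finite "\<lambda>_. density lborel (normal_density 0 \<sigma>)"
      unfolding product_sigma_finite_def
      using prob_space_normal_density[OF sig] by (auto intro: prob_space_imp_sigma_finite)
    interpret pl: product_sigma_finite "\<lambda>_::real^'d. lborel :: real measure"
      by (simp add: product_sigma_finite_def lborel.sigma_finite_measure_axioms)
    show ?thesis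
    proof (rule ps.PiM_eqI)
      show "finite (Basis :: (real^'d) set)" by simp
      show "sets (density ?L (\<lambda>f. ?g (?T f))) = sets ?N"
        by (simp cong: sets_PiM_cong)
    next
      fix A assume A: "\<And>i. i \<in> (Basis :: (real^'d) set) \<Longrightarrow> A i \<in> sets (density lborel (normal_density 0 \<sigma>))"
      then have A': "\<And>i. i \<in> (Basis :: (real^'d) set) \<Longrightarrow> A i \<in> sets borel" by simp
      have PA: "Pi\<^sub>E Basis A \<in> sets ?L"
        using A' by (intro sets_PiM_I_finite) auto
      have "emeasure (density ?L (\<lambda>f. ?g (?T f))) (Pi\<^sub>E Basis A)
          = (\<integral>\<^sup>+f. ?g (?T f) * indicator (Pi\<^sub>E Basis A) f \<partial>?L)"
        using PA by (subst emeasure_density) auto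
      also have "\<dots> = (\<integral>\<^sup>+f. (\<Prod>b\<in>Basis. ennreal (normal_density 0 \<sigma> (f b)) * indicator (A b) (f b)) \<partial>?L)"
      proof (rule nn_integral_cong)
        fix f :: "real^'d \<Rightarrow> real" assume f: "f \<in> space ?L"
        then have ext: "f \<in> extensional Basis" by (simp add: space_PiM PiE_def)
        have "?g (?T f) = (\<Prod>b\<in>Basis. ennreal (normal_density 0 \<sigma> (f b)))"
          unfolding vec_T_component prod_axis_reindex[of "\<lambda>b. normal_density 0 \<sigma> (f b)"]
          by (simp add: prod_ennreal)
        then show "?g (?T f) * indicator (Pi\<^sub>E Basis A) f
              = (\<Prod>b\<in>Basis. ennreal (normal_density 0 \<sigma> (f b)) * indicator (A b) (f b))"
          using ext by (simp add: indicator_PiE_prod prod.distrib)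
      qed
      also have "\<dots> = (\<Prod>b\<in>Basis. \<integral>\<^sup>+x. ennreal (normal_density 0 \<sigma> x) * indicator (A b) x \<partial>lborel)"
        using A' by (intro pl.product_nn_integral_prod) auto
      also have "\<dots> = (\<Prod>b\<in>Basis. emeasure (density lborel (normal_density 0 \<sigma>)) (A b))"
        using A' by (intro prod.cong refl) (simp add: emeasure_density)
      finally show "emeasure (density ?L (\<lambda>f. ?g (?T f))) (Pi\<^sub>E Basis A)
          = (\<Prod>b\<in>Basis. emeasure (density lborel (normal_density 0 \<sigma>)) (A b))" .
    qed
  qed
  finally show ?thesis .
qed

lemma gauss_proj:
  fixes \<sigma> :: real and u :: "real^'d"
  assumes sig: "\<sigma> > 0" and u: "norm u = 1"
  shows "distr (gauss_vec \<sigma>) borel (\<lambda>n. n \<bullet> u) = density lborel (normal_density 0 \<sigma>)"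
proof -
  let ?B = "Basis :: (real^'d) set"
  let ?G = "density lborel (normal_density 0 \<sigma>)"
  let ?N = "PiM ?B (\<lambda>_. ?G)"
  let ?T = "\<lambda>f. \<Sum>b\<in>?B. f b *\<^sub>R b"
  define B' where "B' = {b\<in>?B. b \<bullet> u \<noteq> 0}"
  have G: "prob_space ?G" using prob_space_normal_density[OF sig] .
  interpret N: prob_space ?N by (rule prob_space_PiM) (use G in auto)
  have setsG: "sets ?G = sets borel" by simp
  have comp_meas[measurable]: "(\<lambda>f. f b) \<in> borel_measurable ?N" if "b \<in> ?B" for b
    using that by (simp add: measurable_component_singleton cong: measurable_cong_sets)
  have T_meas[measurable]: "?T \<in> borel_measurable ?N" by measurable
  have comp_distr: "distr ?N lborel (\<lambda>f. f b) = ?G" if "b \<in> ?B" for b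
  proof -
    have "distr ?N lborel (\<lambda>f. f b) = distr ?N ?G (\<lambda>f. f b)" by (rule distr_cong) auto
    also have "\<dots> = ?G" using that G by (intro distr_PiM_component) auto
    finally show ?thesis .
  qed
  have indep: "N.indep_vars (\<lambda>_. borel) (\<lambda>b f. f b) ?B"
  proof (rule N.indep_vars_iff_distr_eq_PiM'[THEN iffD2])
    show "?B \<noteq> {}" by simp
    show "(\<lambda>f. f b) \<in> measurable ?N borel" if "b \<in> ?B" for b using comp_meas[OF that] by simp
    have "distr ?N (PiM ?B (\<lambda>_. borel)) (\<lambda>x. \<lambda>b\<in>?B. x b) = distr ?N ?N (\<lambda>x. x)"
      by (rule distr_cong) (auto simp: space_PiM PiE_def extensional_def restrict_def cong: sets_PiM_cong)
    also have "\<dots> = ?N" by (rule distr_id)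
    also have "\<dots> = PiM ?B (\<lambda>b. distr ?N borel (\<lambda>f. f b))"
    proof (rule PiM_cong)
      fix b assume "b \<in> ?B"
      then show "?G = distr ?N borel (\<lambda>f. f b)"
        using comp_distr[of b] by (metis distr_cong sets_lborel)
    qed simp
    finally show "distr ?N (PiM ?B (\<lambda>_. borel)) (\<lambda>x. \<lambda>b\<in>?B. x b) = PiM ?B (\<lambda>b. distr ?N borel (\<lambda>f. f b))" .
  qed
  have indep2: "N.indep_vars (\<lambda>_. borel) (\<lambda>b f. 0 + (b \<bullet> u) * f b) B'"
  proof -
    have "N.indep_vars (\<lambda>_. borel) (\<lambda>b f. (\<lambda>x. 0 + (b \<bullet> u) * x) (f b)) ?B"
      by (rule N.indep_vars_compose2[OF indep]) measurable
    then show ?thesis by (rule N.indep_vars_subset) (auto simp: B'_def)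
  qed
  have dist1: "distributed ?N lborel (\<lambda>f. 0 + (b \<bullet> u) * f b)
      (\<lambda>x. ennreal (normal_density (0 + (b \<bullet> u) * 0) (\<bar>b \<bullet> u\<bar> * \<sigma>) x))" if "b \<in> B'" for b
  proof (rule N.normal_density_affine)
    show "distributed ?N lborel (\<lambda>f. f b) (\<lambda>x. ennreal (normal_density 0 \<sigma> x))"
      using that comp_distr[of b] by (auto simp: distributed_def B'_def)
  qed (use that sig in \<open>auto simp: B'_def\<close>)
  have B'ne: "B' \<noteq> {}"
  proof
    assume "B' = {}"
    then have "\<And>b. b \<in> ?B \<Longrightarrow> u \<bullet> b = 0" by (auto simp: B'_def inner_commute)
    then have "u = 0" by (intro euclidean_eqI[where 'a="real^'d"]) simp
    then show False using u by simp
  qed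
  have sumsq: "(\<Sum>b\<in>B'. (\<bar>b \<bullet> u\<bar> * \<sigma>)\<^sup>2) = \<sigma>\<^sup>2"
  proof -
    have "(\<Sum>b\<in>B'. (\<bar>b \<bullet> u\<bar> * \<sigma>)\<^sup>2) = (\<Sum>b\<in>?B. (b \<bullet> u)\<^sup>2) * \<sigma>\<^sup>2"
    proof -
      have "(\<Sum>b\<in>B'. (\<bar>b \<bullet> u\<bar> * \<sigma>)\<^sup>2) = (\<Sum>b\<in>?B. (\<bar>b \<bullet> u\<bar> * \<sigma>)\<^sup>2)"
        unfolding B'_def by (rule sum.mono_neutral_cong_left) auto
      also have "\<dots> = (\<Sum>b\<in>?B. (b \<bullet> u)\<^sup>2) * \<sigma>\<^sup>2"
        by (simp add: sum_distrib_right power_mult_distrib)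
      finally show ?thesis .
    qed
    also have "(\<Sum>b\<in>?B. (b \<bullet> u)\<^sup>2) = u \<bullet> u"
      by (subst euclidean_inner) (simp add: power2_eq_square inner_commute)
    also have "u \<bullet> u = 1" using u by (simp add: power2_norm_eq_inner[symmetric])
    finally show ?thesis by simp
  qed
  have dist: "distributed ?N lborel (\<lambda>f. \<Sum>b\<in>B'. 0 + (b \<bullet> u) * f b)
      (\<lambda>x. ennreal (normal_density (\<Sum>b\<in>B'. 0 + (b \<bullet> u) * 0) (sqrt (\<Sum>b\<in>B'. (\<bar>b \<bullet> u\<bar> * \<sigma>)\<^sup>2)) x))"
    by (rule N.sum_indep_normal[OF _ B'ne indep2 _ dist1])
       (use sig in \<open>auto simp: B'_def\<close>)
  then have dist': "distr ?N lborel (\<lambda>f. \<Sum>b\<in>B'. (b \<bullet> u) * f b) = density lborel (normal_density 0 \<sigma>)"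
    using sig by (simp add: distributed_def sumsq)
  have "distr (gauss_vec \<sigma>) borel (\<lambda>n. n \<bullet> u) = distr ?N borel (\<lambda>f. ?T f \<bullet> u)"
    unfolding gauss_vec_eq[OF sig] by (subst distr_distr) (auto simp: comp_def)
  also have "\<dots> = distr ?N lborel (\<lambda>f. \<Sum>b\<in>B'. (b \<bullet> u) * f b)"
  proof (rule distr_cong)
    fix f :: "real^'d \<Rightarrow> real"
    have "?T f \<bullet> u = (\<Sum>b\<in>?B. (b \<bullet> u) * f b)" by (simp add: inner_sum_left mult.commute)
    also have "\<dots> = (\<Sum>b\<in>B'. (b \<bullet> u) * f b)"
      unfolding B'_def by (rule sum.mono_neutral_cong_right) auto
    finally show "?T f \<bullet> u = (\<Sum>b\<in>B'. (b \<bullet> u) * f b)" .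
  qed auto
  finally show ?thesis using dist' by simp
qed

lemma cond_data_props:
  fixes MX :: "'x measure" and \<theta> :: "('s \<times> 'x) measure"
  assumes th: "prob_space \<theta>" and sets_th: "sets \<theta> = sets (count_space UNIV \<Otimes>\<^sub>M MX)"
    and pos: "sec_prob MX \<theta> s > 0"
  shows "prob_space (cond_data MX \<theta> s) \<and> sets (cond_data MX \<theta> s) = sets MX
       \<and> space (cond_data MX \<theta> s) = space MX"
proof -
  interpret th: prob_space \<theta> by fact
  have space_th: "space \<theta> = UNIV \<times> space MX"
    using sets_eq_imp_space_eq[OF sets_th] by (simp add: space_pair_measure)
  have meas_rect: "{s} \<times> A \<in> sets \<theta>" if "A \<in> sets MX" for A
    unfolding sets_th using that by (intro pair_measureI) auto
  define c where "c = emeasure \<theta> ({s} \<times> space MX)"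
  have c_eq: "c = ennreal (sec_prob MX \<theta> s)"
    unfolding c_def sec_prob_def by (simp add: th.emeasure_eq_measure)
  have c0: "c \<noteq> 0" using pos c_eq by simp
  have cT: "c \<noteq> \<infinity>" using c_eq by simp
  have snd_meas[measurable]: "snd \<in> measurable \<theta> MX"
    by (simp add: measurable_cong_sets[OF sets_th refl])
  define k where "k w = indicator ({s} \<times> space MX) w / c" for w :: "'s \<times> 'x"
  have k_meas[measurable]: "k \<in> borel_measurable \<theta>"
    unfolding k_def using meas_rect[OF sets.top] by measurable
  define M' where "M' = distr (density \<theta> k) MX snd"
  have eM': "emeasure M' A = emeasure \<theta> ({s} \<times> A) / c" if A: "A \<in> sets MX" for A
  proof -
    have "emeasure M' A = emeasure (density \<theta> k) (snd -` A \<inter> space \<theta>)"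
      unfolding M'_def using A by (subst emeasure_distr) (auto simp: measurable_density_eq1)
    also have "\<dots> = (\<integral>\<^sup>+w. k w * indicator (snd -` A \<inter> space \<theta>) w \<partial>\<theta>)"
      using A by (subst emeasure_density) (auto intro: measurable_sets[OF snd_meas])
    also have "\<dots> = (\<integral>\<^sup>+w. indicator ({s} \<times> A) w / c \<partial>\<theta>)"
    proof (rule nn_integral_cong)
      fix w assume "w \<in> space \<theta>"
      then show "k w * indicator (snd -` A \<inter> space \<theta>) w = indicator ({s} \<times> A) w / c"
        using sets.sets_into_space[OF A] space_th
        by (cases w) (auto simp: k_def indicator_def)
    qed
    also have "\<dots> = emeasure \<theta> ({s} \<times> A) / c"
      using meas_rect[OF A] by (subst nn_integral_divide) auto
    finally show ?thesis .
  qed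
  have sM': "sets M' = sets MX" "space M' = space MX" unfolding M'_def by auto
  have cd_eq: "cond_data MX \<theta> s = M'"
  proof -
    have "cond_data MX \<theta> s = measure_of (space MX) (sets MX) (emeasure M')"
      unfolding cond_data_def
      by (rule measure_of_eq) (auto simp: sets.space_closed eM' c_def sets.sigma_sets_eq)
    also have "\<dots> = M'" using measure_of_of_measure[of M'] sM' by simp
    finally show ?thesis .
  qed
  have "prob_space M'"
  proof (rule prob_spaceI)
    have "emeasure M' (space M') = c / c" unfolding sM' eM'[OF sets.top] c_def ..
    also have "\<dots> = 1" using c_eq pos by (simp add: divide_ennreal)
    finally show "emeasure M' (space M') = 1" .
  qed
  then show ?thesis using cd_eq sM' by simp
qed

lemma mech_proj:
  fixes C :: "'x measure" and f :: "'x \<Rightarrow> real^'d" and \<sigma> :: real and u :: "real^'d"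
  assumes C: "prob_space C" and f[measurable]: "f \<in> C \<rightarrow>\<^sub>M borel" and sig: "\<sigma> > 0" and u: "norm u = 1"
  shows "proj u (distr (C \<Otimes>\<^sub>M gauss_vec \<sigma>) borel (\<lambda>(x, n). f x + n))
       = density lborel (\<lambda>z. \<integral>\<^sup>+x. ennreal (normal_density (f x \<bullet> u) \<sigma> z) \<partial>C)"
proof -
  let ?G = "gauss_vec \<sigma> :: (real^'d) measure"
  interpret C: prob_space C by fact
  have G: "prob_space ?G"
    unfolding gauss_vec_eq[OF sig]
    by (intro prob_space.prob_space_distr prob_space_PiM prob_space_normal_density[OF sig]) measurable
  interpret G: prob_space ?G by fact
  interpret CG: pair_sigma_finite C ?G by unfold_locales
  interpret LC: pair_sigma_finite lborel C by unfold_locales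
  have setsG[measurable_cong]: "sets ?G = sets borel" by (simp add: gauss_vec_def)
  define p where "p z = (\<integral>\<^sup>+x. ennreal (normal_density (f x \<bullet> u) \<sigma> z) \<partial>C)" for z
  have p_meas[measurable]: "p \<in> borel_measurable borel" unfolding p_def by measurable
  have L: "proj u (distr (C \<Otimes>\<^sub>M ?G) borel (\<lambda>(x, n). f x + n))
        = distr (C \<Otimes>\<^sub>M ?G) borel (\<lambda>(x, n). f x \<bullet> u + n \<bullet> u)"
    unfolding proj_def by (subst distr_distr) (auto simp: comp_def inner_add_left split_beta')
  have inner: "emeasure ?G {n \<in> space ?G. a + n \<bullet> u \<in> B} = (\<integral>\<^sup>+z. ennreal (normal_density a \<sigma> z) * indicator B z \<partial>lborel)"
    if B: "B \<in> sets borel" for a B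
  proof -
    have "{n \<in> space ?G. a + n \<bullet> u \<in> B} = (\<lambda>n. n \<bullet> u) -` {t. a + t \<in> B} \<inter> space ?G" by auto
    then have "emeasure ?G {n \<in> space ?G. a + n \<bullet> u \<in> B} = emeasure (distr ?G borel (\<lambda>n. n \<bullet> u)) {t. a + t \<in> B}"
      using B by (subst emeasure_distr) auto
    also have "\<dots> = emeasure (density lborel (normal_density 0 \<sigma>)) {t. a + t \<in> B}"
      by (simp add: gauss_proj[OF sig u])
    also have "\<dots> = (\<integral>\<^sup>+t. ennreal (normal_density 0 \<sigma> t) * indicator {t. a + t \<in> B} t \<partial>lborel)"
      using B by (subst emeasure_density) auto
    also have "\<dots> = (\<integral>\<^sup>+t. ennreal (normal_density a \<sigma> (a + t)) * indicator B (a + t) \<partial>lborel)"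
      by (intro nn_integral_cong) (simp add: normal_density_def indicator_def)
    also have "\<dots> = (\<integral>\<^sup>+z. ennreal (normal_density a \<sigma> z) * indicator B z \<partial>distr lborel borel ((+) a))"
      using B by (subst nn_integral_distr) auto
    also have "\<dots> = (\<integral>\<^sup>+z. ennreal (normal_density a \<sigma> z) * indicator B z \<partial>lborel)"
      by (simp add: lborel_distr_plus)
    finally show ?thesis .
  qed
  show ?thesis
  proof (unfold L, rule measure_eqI)
    fix B assume "B \<in> sets (distr (C \<Otimes>\<^sub>M ?G) borel (\<lambda>(x, n). f x \<bullet> u + n \<bullet> u))"
    then have B[measurable]: "B \<in> sets borel" by simp
    have "emeasure (distr (C \<Otimes>\<^sub>M ?G) borel (\<lambda>(x, n). f x \<bullet> u + n \<bullet> u)) B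
        = emeasure (C \<Otimes>\<^sub>M ?G) ((\<lambda>(x, n). f x \<bullet> u + n \<bullet> u) -` B \<inter> space (C \<Otimes>\<^sub>M ?G))"
      by (subst emeasure_distr) auto
    also have "\<dots> = (\<integral>\<^sup>+x. emeasure ?G (Pair x -` ((\<lambda>(x, n). f x \<bullet> u + n \<bullet> u) -` B \<inter> space (C \<Otimes>\<^sub>M ?G))) \<partial>C)"
      by (rule G.emeasure_pair_measure_alt) measurable
    also have "\<dots> = (\<integral>\<^sup>+x. (\<integral>\<^sup>+z. ennreal (normal_density (f x \<bullet> u) \<sigma> z) * indicator B z \<partial>lborel) \<partial>C)"
    proof (rule nn_integral_cong)
      fix x assume x: "x \<in> space C"
      have "Pair x -` ((\<lambda>(x, n). f x \<bullet> u + n \<bullet> u) -` B \<inter> space (C \<Otimes>\<^sub>M ?G)) = {n \<in> space ?G. f x \<bullet> u + n \<bullet> u \<in> B}"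
        using x by (auto simp: space_pair_measure)
      then show "emeasure ?G (Pair x -` ((\<lambda>(x, n). f x \<bullet> u + n \<bullet> u) -` B \<inter> space (C \<Otimes>\<^sub>M ?G)))
          = (\<integral>\<^sup>+z. ennreal (normal_density (f x \<bullet> u) \<sigma> z) * indicator B z \<partial>lborel)"
        using inner[OF B] by simp
    qed
    also have "\<dots> = (\<integral>\<^sup>+z. (\<integral>\<^sup>+x. ennreal (normal_density (f x \<bullet> u) \<sigma> z) * indicator B z \<partial>C) \<partial>lborel)"
      by (rule LC.Fubini') measurable
    also have "\<dots> = (\<integral>\<^sup>+z. p z * indicator B z \<partial>lborel)"
      unfolding p_def by (intro nn_integral_cong) (simp add: nn_integral_multc)
    also have "\<dots> = emeasure (density lborel p) B"
      by (subst emeasure_density) auto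
    finally have "emeasure (distr (C \<Otimes>\<^sub>M ?G) borel (\<lambda>(x, n). f x \<bullet> u + n \<bullet> u)) B = emeasure (density lborel p) B" .
    then show "emeasure (distr (C \<Otimes>\<^sub>M ?G) borel (\<lambda>(x, n). f x \<bullet> u + n \<bullet> u)) B
       = emeasure (density lborel (\<lambda>z. \<integral>\<^sup>+x. ennreal (normal_density (f x \<bullet> u) \<sigma> z) \<partial>C)) B"
      by (simp add: p_def[abs_def])
  qed simp
qed

lemma msupport_AE:
  fixes \<pi> :: "(real \<times> real) measure"
  assumes sets_pi: "sets \<pi> = sets (borel \<Otimes>\<^sub>M borel)"
  shows "AE z in \<pi>. z \<in> msupport \<pi>"
proof -
  have sets_pi': "sets \<pi> = sets borel" using sets_pi by (metis borel_prod)
  obtain \<B> :: "(real \<times> real) set set" where B: "countable \<B>" "\<And>C. C \<in> \<B> \<Longrightarrow> open C"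
    "\<And>S. open S \<Longrightarrow> \<exists>U\<subseteq>\<B>. S = \<Union>U"
    by (rule univ_second_countable) blast
  define B0 where "B0 = {b\<in>\<B>. emeasure \<pi> b = 0}"
  have op_sets: "open S \<Longrightarrow> S \<in> sets \<pi>" for S unfolding sets_pi' by simp
  have null: "\<Union>B0 \<in> null_sets \<pi>"
  proof -
    have "\<Union>((\<lambda>b. b) ` B0) \<in> null_sets \<pi>"
      by (rule null_sets_UN') (use B in \<open>auto simp: B0_def null_sets_def op_sets countable_subset[of B0 \<B>]\<close>)
    then show ?thesis by simp
  qed
  show ?thesis
  proof (rule AE_I'[OF null], safe)
    fix z assume "z \<in> space \<pi>" "z \<notin> msupport \<pi>"
    then obtain U where U: "open U" "z \<in> U" "\<not> 0 < emeasure \<pi> U" by (auto simp: msupport_def)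
    then have U0: "emeasure \<pi> U = 0" by (simp add: not_less)
    obtain V where V: "V \<subseteq> \<B>" "U = \<Union>V" using B(3)[OF U(1)] by blast
    then obtain b where b: "b \<in> V" "z \<in> b" using U(2) by blast
    have "emeasure \<pi> b \<le> emeasure \<pi> U"
      using b V op_sets[OF U(1)] by (intro emeasure_mono) auto
    then have "emeasure \<pi> b = 0" using U0 by simp
    then show "z \<in> \<Union>B0" using b V by (auto simp: B0_def)
  qed
qed

lemma renyi_u_bound:
  fixes MX :: "'x measure" and \<theta> :: "('s \<times> 'x) measure" and f :: "'x \<Rightarrow> real^'d"
  assumes th: "prob_space \<theta>" and sets_th: "sets \<theta> = sets (count_space UNIV \<Otimes>\<^sub>M MX)"
    and posi: "sec_prob MX \<theta> si > 0" and posj: "sec_prob MX \<theta> sj > 0"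
    and f: "f \<in> MX \<rightarrow>\<^sub>M borel" and sig: "\<sigma> > 0" and u: "norm u = 1" and alpha: "\<alpha> > 1"
    and W: "W_inf (proj u (query_law MX \<theta> f si)) (proj u (query_law MX \<theta> f sj)) \<le> ereal D"
    and D: "D \<ge> 0"
  shows "renyi_div \<alpha> (proj u (gauss_mech_law MX f \<sigma> \<theta> si)) (proj u (gauss_mech_law MX f \<sigma> \<theta> sj))
       \<le> ennreal (\<alpha> * D\<^sup>2 / (2*\<sigma>\<^sup>2))"
proof -
  let ?Ci = "cond_data MX \<theta> si" and ?Cj = "cond_data MX \<theta> sj"
  have Ci: "prob_space ?Ci" "sets ?Ci = sets MX" "space ?Ci = space MX"
    using cond_data_props[OF th sets_th posi] by auto
  have Cj: "prob_space ?Cj" "sets ?Cj = sets MX" "space ?Cj = space MX"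
    using cond_data_props[OF th sets_th posj] by auto
  have fi[measurable]: "f \<in> ?Ci \<rightarrow>\<^sub>M borel" using f Ci(2) by (simp cong: measurable_cong_sets)
  have fj[measurable]: "f \<in> ?Cj \<rightarrow>\<^sub>M borel" using f Cj(2) by (simp cong: measurable_cong_sets)
  have Pi: "proj u (gauss_mech_law MX f \<sigma> \<theta> si) = density lborel (\<lambda>z. \<integral>\<^sup>+x. ennreal (normal_density (f x \<bullet> u) \<sigma> z) \<partial>?Ci)"
    unfolding gauss_mech_law_def by (rule mech_proj[OF Ci(1) fi sig u])
  have Pj: "proj u (gauss_mech_law MX f \<sigma> \<theta> sj) = density lborel (\<lambda>z. \<integral>\<^sup>+x. ennreal (normal_density (f x \<bullet> u) \<sigma> z) \<partial>?Cj)"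
    unfolding gauss_mech_law_def by (rule mech_proj[OF Cj(1) fj sig u])
  have qi: "proj u (query_law MX \<theta> f si) = distr ?Ci borel (\<lambda>x. f x \<bullet> u)"
    unfolding proj_def query_law_def by (subst distr_distr) (auto simp: comp_def)
  have qj: "proj u (query_law MX \<theta> f sj) = distr ?Cj borel (\<lambda>x. f x \<bullet> u)"
    unfolding proj_def query_law_def by (subst distr_distr) (auto simp: comp_def)
  let ?R = "renyi_div \<alpha> (proj u (gauss_mech_law MX f \<sigma> \<theta> si)) (proj u (gauss_mech_law MX f \<sigma> \<theta> sj))"
  have step: "?R \<le> ennreal (\<alpha> * (D + \<delta>)\<^sup>2 / (2*\<sigma>\<^sup>2))" if \<delta>: "\<delta> > 0" for \<delta>
  proof -
    have "W_inf (proj u (query_law MX \<theta> f si)) (proj u (query_law MX \<theta> f sj)) < ereal (D + \<delta>)"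
      using W \<delta> by (simp add: le_less_trans)
    then obtain \<pi> where \<pi>: "\<pi> \<in> couplings (proj u (query_law MX \<theta> f si)) (proj u (query_law MX \<theta> f sj))"
      and sup: "(SUP z \<in> msupport \<pi>. ereal \<bar>fst z - snd z\<bar>) < ereal (D + \<delta>)"
      unfolding W_inf_def by (auto simp: INF_less_iff)
    have pi: "prob_space \<pi>" and sets_pi[measurable_cong]: "sets \<pi> = sets (borel \<Otimes>\<^sub>M borel)"
      and m1: "distr \<pi> borel fst = distr ?Ci borel (\<lambda>x. f x \<bullet> u)"
      and m2: "distr \<pi> borel snd = distr ?Cj borel (\<lambda>x. f x \<bullet> u)"
      using \<pi> by (auto simp: couplings_def qi qj)
    have AEd: "AE w in \<pi>. \<bar>fst w - snd w\<bar> \<le> D + \<delta>"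
      using msupport_AE[OF sets_pi]
    proof (rule eventually_mono)
      fix w assume "w \<in> msupport \<pi>"
      then have "ereal \<bar>fst w - snd w\<bar> \<le> (SUP z \<in> msupport \<pi>. ereal \<bar>fst z - snd z\<bar>)"
        by (rule SUP_upper)
      then have "ereal \<bar>fst w - snd w\<bar> < ereal (D + \<delta>)" using sup by (rule le_less_trans)
      then show "\<bar>fst w - snd w\<bar> \<le> D + \<delta>" by simp
    qed
    have ei: "(\<integral>\<^sup>+x. ennreal (normal_density (f x \<bullet> u) \<sigma> z) \<partial>?Ci) = (\<integral>\<^sup>+w. ennreal (normal_density (fst w) \<sigma> z) \<partial>\<pi>)" for z
    proof -
      have "(\<integral>\<^sup>+x. ennreal (normal_density (f x \<bullet> u) \<sigma> z) \<partial>?Ci) = (\<integral>\<^sup>+t. ennreal (normal_density t \<sigma> z) \<partial>distr ?Ci borel (\<lambda>x. f x \<bullet> u))"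
        by (subst nn_integral_distr) auto
      also have "\<dots> = (\<integral>\<^sup>+w. ennreal (normal_density (fst w) \<sigma> z) \<partial>\<pi>)"
        unfolding m1[symmetric] by (subst nn_integral_distr) auto
      finally show ?thesis .
    qed
    have ej: "(\<integral>\<^sup>+x. ennreal (normal_density (f x \<bullet> u) \<sigma> z) \<partial>?Cj) = (\<integral>\<^sup>+w. ennreal (normal_density (snd w) \<sigma> z) \<partial>\<pi>)" for z
    proof -
      have "(\<integral>\<^sup>+x. ennreal (normal_density (f x \<bullet> u) \<sigma> z) \<partial>?Cj) = (\<integral>\<^sup>+t. ennreal (normal_density t \<sigma> z) \<partial>distr ?Cj borel (\<lambda>x. f x \<bullet> u))"
        by (subst nn_integral_distr) auto
      also have "\<dots> = (\<integral>\<^sup>+w. ennreal (normal_density (snd w) \<sigma> z) \<partial>\<pi>)"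
        unfolding m2[symmetric] by (subst nn_integral_distr) auto
      finally show ?thesis .
    qed
    show ?thesis
      unfolding Pi Pj ei ej
      by (rule renyi_coupling_bound[OF sig alpha pi sets_pi _ AEd]) (use D \<delta> in simp)
  qed
  show ?thesis
  proof (rule ennreal_le_epsilon)
    fix e :: real assume e: "e > 0"
    define \<delta> where "\<delta> = min 1 (e * (2*\<sigma>\<^sup>2) / (\<alpha> * (2*D+1)))"
    have \<delta>0: "\<delta> > 0" using e sig alpha D by (simp add: \<delta>_def)
    have \<delta>1: "\<delta> \<le> 1" by (simp add: \<delta>_def)
    have \<delta>2: "\<delta> * (\<alpha> * (2*D+1)) \<le> e * (2*\<sigma>\<^sup>2)"
    proof -
      have K: "\<alpha> * (2*D+1) > 0" using alpha D by simp
      have "\<delta> \<le> e * (2*\<sigma>\<^sup>2) / (\<alpha> * (2*D+1))" by (simp add: \<delta>_def)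
      then show ?thesis using K by (simp add: le_divide_eq)
    qed
    have "(D + \<delta>)\<^sup>2 \<le> D\<^sup>2 + \<delta> * (2*D+1)"
      using \<delta>0 \<delta>1 D by (simp add: power2_eq_square algebra_simps mult_left_le_one_le)
    then have "\<alpha> * (D + \<delta>)\<^sup>2 / (2*\<sigma>\<^sup>2) \<le> \<alpha> * (D\<^sup>2 + \<delta> * (2*D+1)) / (2*\<sigma>\<^sup>2)"
      using alpha sig by (intro divide_right_mono mult_left_mono) auto
    also have "\<dots> = \<alpha> * D\<^sup>2 / (2*\<sigma>\<^sup>2) + \<delta> * (\<alpha> * (2*D+1)) / (2*\<sigma>\<^sup>2)"
      by (simp add: algebra_simps add_divide_distrib)
    also have "\<dots> \<le> \<alpha> * D\<^sup>2 / (2*\<sigma>\<^sup>2) + e"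
      using \<delta>2 sig by (simp add: divide_le_eq)
    finally have "\<alpha> * (D + \<delta>)\<^sup>2 / (2*\<sigma>\<^sup>2) \<le> \<alpha> * D\<^sup>2 / (2*\<sigma>\<^sup>2) + e" .
    then have "ennreal (\<alpha> * (D + \<delta>)\<^sup>2 / (2*\<sigma>\<^sup>2)) \<le> ennreal (\<alpha> * D\<^sup>2 / (2*\<sigma>\<^sup>2)) + ennreal e"
      using alpha sig D e by (simp add: ennreal_plus[symmetric] del: ennreal_plus)
    then show "?R \<le> ennreal (\<alpha> * D\<^sup>2 / (2*\<sigma>\<^sup>2)) + ennreal e"
      using step[OF \<delta>0] by (rule order.trans[rotated])
  qed
qed

lemma nn_minorant:
  fixes g :: "'a \<Rightarrow> ennreal"
  shows "\<exists>h\<in>borel_measurable M. (\<forall>x. h x \<le> g x) \<and> integral\<^sup>N M h = integral\<^sup>N M g"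
proof -
  define A where "A = {s. simple_function M s \<and> s \<le> g}"
  have Ane: "A \<noteq> {}"
  proof -
    have "(\<lambda>_. 0) \<in> {s. simple_function M s \<and> s \<le> g}" by (auto simp: le_fun_def)
    then show ?thesis unfolding A_def by blast
  qed
  obtain F :: "nat \<Rightarrow> ennreal" where F: "range F \<subseteq> integral\<^sup>S M ` A" "Sup (integral\<^sup>S M ` A) = Sup (F ` UNIV)"
    using ennreal_SUP_countable_SUP[OF Ane, of "integral\<^sup>S M"] by blast
  have "\<forall>n. \<exists>s\<in>A. F n = integral\<^sup>S M s" using F(1) by blast
  then obtain s where s: "\<And>n. s n \<in> A" "\<And>n. F n = integral\<^sup>S M (s n)" by metis
  define h where "h x = (SUP n. s n x)" for x
  have s_simple: "simple_function M (s n)" for n using s(1)[of n] by (simp add: A_def)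
  have s_le: "s n x \<le> g x" for n x using s(1)[of n] by (simp add: A_def le_fun_def)
  have h_meas: "h \<in> borel_measurable M"
    unfolding h_def by (intro borel_measurable_SUP borel_measurable_simple_function s_simple) simp
  have h_le: "h x \<le> g x" for x unfolding h_def by (intro SUP_least s_le)
  have "integral\<^sup>N M g = Sup (F ` UNIV)" unfolding nn_integral_def A_def[symmetric] F(2) ..
  also have "\<dots> \<le> integral\<^sup>N M h"
  proof (rule SUP_least)
    fix n
    have "F n = integral\<^sup>N M (s n)" using s(2) nn_integral_eq_simple_integral[OF s_simple] by simp
    also have "\<dots> \<le> integral\<^sup>N M h" unfolding h_def by (intro nn_integral_mono SUP_upper) auto
    finally show "F n \<le> integral\<^sup>N M h" .
  qed
  finally have "integral\<^sup>N M g \<le> integral\<^sup>N M h" .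
  moreover have "integral\<^sup>N M h \<le> integral\<^sup>N M g" by (intro nn_integral_mono h_le)
  ultimately show ?thesis using h_meas h_le by (intro bexI[of _ h]) auto
qed

lemma nn_integral_cmult_le:
  fixes g :: "'a \<Rightarrow> ennreal" and c :: real
  assumes c: "c \<ge> 0"
  shows "(\<integral>\<^sup>+x. ennreal c * g x \<partial>M) \<le> ennreal c * integral\<^sup>N M g"
proof (cases "c = 0")
  case True then show ?thesis by simp
next
  case False
  then have c0: "c > 0" using c by simp
  obtain h where h: "h \<in> borel_measurable M" "\<And>x. h x \<le> ennreal c * g x"
    "integral\<^sup>N M h = (\<integral>\<^sup>+x. ennreal c * g x \<partial>M)"
    using nn_minorant[of M "\<lambda>x. ennreal c * g x"] by blast
  have hc: "h x = ennreal c * (h x / ennreal c)" for x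
  proof -
    have "ennreal c * (h x / ennreal c) = h x * ennreal c / ennreal c" by (simp add: ennreal_times_divide mult.commute)
    also have "\<dots> = h x" using c0 by (intro ennreal_mult_divide_eq) auto
    finally show ?thesis by simp
  qed
  have le: "h x / ennreal c \<le> g x" for x
  proof -
    have "h x / ennreal c \<le> (ennreal c * g x) / ennreal c" using h(2)[of x] by (rule divide_right_mono_ennreal)
    also have "\<dots> = g x" using c0 by (subst mult.commute) (intro ennreal_mult_divide_eq, auto)
    finally show ?thesis .
  qed
  have "(\<integral>\<^sup>+x. ennreal c * g x \<partial>M) = integral\<^sup>N M h" using h(3) by simp
  also have "\<dots> = (\<integral>\<^sup>+x. ennreal c * (h x / ennreal c) \<partial>M)" by (rule nn_integral_cong) (rule hc)
  also have "\<dots> = ennreal c * (\<integral>\<^sup>+x. h x / ennreal c \<partial>M)"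
  proof (rule nn_integral_cmult)
    have [measurable]: "(\<lambda>x. inverse (ennreal c)) \<in> borel_measurable M" by simp
    show "(\<lambda>x. h x / ennreal c) \<in> borel_measurable M"
      unfolding divide_ennreal_def using h(1) by measurable
  qed
  also have "\<dots> \<le> ennreal c * integral\<^sup>N M g"
    by (intro mult_left_mono nn_integral_mono le) auto
  finally show ?thesis .
qed

lemma hoeffding_prod:
  fixes \<omega> :: "'a measure" and h :: "'a \<Rightarrow> real" and m :: nat
  assumes \<omega>: "prob_space \<omega>" and h[measurable]: "h \<in> borel_measurable \<omega>"
    and hb: "\<And>x. x \<in> space \<omega> \<Longrightarrow> 0 \<le> h x \<and> h x \<le> b" and b: "b > 0" and m: "m > 0" and t: "t \<ge> 0"
  shows "measure (PiM {..<m} (\<lambda>_. \<omega>)) {u \<in> space (PiM {..<m} (\<lambda>_. \<omega>)).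
            (\<Sum>l<m. h (u l)) \<le> real m * (\<integral>x. h x \<partial>\<omega>) - real m * t}
         \<le> exp (-2 * real m * t\<^sup>2 / b\<^sup>2)"
proof -
  let ?I = "{..<m}"
  let ?\<Omega> = "PiM ?I (\<lambda>_. \<omega>)"
  interpret \<Omega>: prob_space ?\<Omega> by (rule prob_space_PiM) (use \<omega> in auto)
  have comp_meas[measurable]: "(\<lambda>u. u l) \<in> ?\<Omega> \<rightarrow>\<^sub>M \<omega>" if "l \<in> ?I" for l
    using that by (rule measurable_component_singleton)
  have comp_distr: "distr ?\<Omega> \<omega> (\<lambda>u. u l) = \<omega>" if "l \<in> ?I" for l
    using that \<omega> by (intro distr_PiM_component) auto
  have indep0: "\<Omega>.indep_vars (\<lambda>_. \<omega>) (\<lambda>l u. u l) ?I"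
  proof (rule \<Omega>.indep_vars_iff_distr_eq_PiM'[THEN iffD2])
    show "?I \<noteq> {}" using m by auto
    show "(\<lambda>u. u l) \<in> ?\<Omega> \<rightarrow>\<^sub>M \<omega>" if "l \<in> ?I" for l using that by (rule comp_meas)
    have "distr ?\<Omega> (PiM ?I (\<lambda>_. \<omega>)) (\<lambda>x. \<lambda>l\<in>?I. x l) = distr ?\<Omega> ?\<Omega> (\<lambda>x. x)"
      by (rule distr_cong) (auto simp: space_PiM PiE_def extensional_def restrict_def)
    also have "\<dots> = ?\<Omega>" by (rule distr_id)
    also have "\<dots> = PiM ?I (\<lambda>l. distr ?\<Omega> \<omega> (\<lambda>u. u l))"
      by (rule PiM_cong) (auto simp: comp_distr)
    finally show "distr ?\<Omega> (PiM ?I (\<lambda>_. \<omega>)) (\<lambda>x. \<lambda>l\<in>?I. x l) = PiM ?I (\<lambda>l. distr ?\<Omega> \<omega> (\<lambda>u. u l))" .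
  qed
  have indep: "\<Omega>.indep_vars (\<lambda>_. borel) (\<lambda>l u. h (u l)) ?I"
    by (rule \<Omega>.indep_vars_compose2[OF indep0]) measurable
  have expect: "\<Omega>.expectation (\<lambda>u. h (u l)) = (\<integral>x. h x \<partial>\<omega>)" if "l \<in> ?I" for l
  proof -
    have "(\<integral>x. h x \<partial>\<omega>) = (\<integral>x. h x \<partial>distr ?\<Omega> \<omega> (\<lambda>u. u l))" using comp_distr[OF that] by simp
    also have "\<dots> = \<Omega>.expectation (\<lambda>u. h (u l))" using that by (subst integral_distr) auto
    finally show ?thesis by simp
  qed
  interpret H: Hoeffding_ineq ?\<Omega> ?I "\<lambda>l u. h (u l)" "\<lambda>_. 0" "\<lambda>_. b" "\<Sum>l\<in>?I. \<Omega>.expectation (\<lambda>u. h (u l))"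
  proof unfold_locales
    show "finite ?I" by simp
    show "\<Omega>.indep_vars (\<lambda>_. borel) (\<lambda>l u. h (u l)) ?I" by (rule indep)
    fix l assume l: "l \<in> ?I"
    show "AE u in ?\<Omega>. h (u l) \<in> {0..b}"
      by (rule AE_I2) (use l hb in \<open>auto simp: space_PiM PiE_def Pi_def\<close>)
  qed simp
  have mu: "(\<Sum>l\<in>?I. \<Omega>.expectation (\<lambda>u. h (u l))) = real m * (\<integral>x. h x \<partial>\<omega>)"
    by (simp add: expect)
  have "\<Omega>.prob {u \<in> space ?\<Omega>. (\<Sum>l\<in>?I. h (u l)) \<le> (\<Sum>l\<in>?I. \<Omega>.expectation (\<lambda>u. h (u l))) - real m * t}
      \<le> exp (-2 * (real m * t)\<^sup>2 / (\<Sum>l\<in>?I. (b - 0)\<^sup>2))"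
    by (rule H.Hoeffding_ineq_le) (use t m b in auto)
  also have "-2 * (real m * t)\<^sup>2 / (\<Sum>l\<in>?I. (b - 0)\<^sup>2) = -2 * real m * t\<^sup>2 / b\<^sup>2"
    using m b by (simp add: power2_eq_square field_simps)
  finally show ?thesis unfolding mu by (simp add: lessThan_def)
qed

lemma h0_le_sq:
  fixes x :: ereal and d D0 :: real
  assumes "0 \<le> x" "x \<le> ereal D0" "x \<le> ereal d"
  shows "(real_of_ereal x)\<^sup>2 \<le> d\<^sup>2" "0 \<le> real_of_ereal x" "real_of_ereal x \<le> D0" "x = ereal (real_of_ereal x)"
  using assms by (cases x; auto intro: power_mono)+

lemma delta_bounds:
  fixes x :: ereal and D0 :: real
  assumes "0 \<le> x" "x \<le> ereal D0"
  shows "0 \<le> real_of_ereal x" "real_of_ereal x \<le> D0" "x = ereal (real_of_ereal x)"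
    "(real_of_ereal x)\<^sup>2 \<le> D0\<^sup>2"
  using assms by (cases x; auto intro: power_mono)+

theorem theorem3:
  fixes MX :: "'x measure" and Sec :: "'s set" and Q :: "('s \<times> 's) set"
    and Th :: "('s \<times> 'x) measure set" and f :: "'x \<Rightarrow> real^'d"
    and \<omega> :: "(real^'d) measure" and m :: nat
    and \<Xi> :: "'r measure" and Dhat :: "(nat \<Rightarrow> real^'d) \<Rightarrow> 'r \<Rightarrow> nat \<Rightarrow> real"
    and \<Delta>0 \<alpha> \<epsilon> \<gamma> :: real
  assumes scen: "pufferfish_scenario MX Sec Q Th"
    and f_meas: "f \<in> MX \<rightarrow>\<^sub>M borel"
    and slice: "slice_distribution \<omega>"
    and m_pos: "m > 0"
    and Delta_bd: "\<forall>u\<in>sphere 0 1. 0 \<le> Delta_inf MX Q Th f u \<and> Delta_inf MX Q Th f u \<le> ereal \<Delta>0"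
    and alpha: "\<alpha> > 1" and eps: "\<epsilon> > 0" and gam: "0 < \<gamma>" "\<gamma> < 1"
    and Xi: "prob_space \<Xi>"
    and Dhat_meas: "\<forall>l<m. (\<lambda>(u, \<xi>). Dhat u \<xi> l)
                       \<in> borel_measurable (PiM {..<m} (\<lambda>_. \<omega>) \<Otimes>\<^sub>M \<Xi>)"
    and Dhat_cover: "AE u in PiM {..<m} (\<lambda>_. \<omega>).
        \<exists>A\<in>sets \<Xi>. measure \<Xi> A \<ge> 1 - \<gamma> / 2 \<and>
          (\<forall>\<xi>\<in>A. \<forall>l<m. Delta_inf MX Q Th f (u l) \<le> ereal (Dhat u \<xi> l))"
  shows "\<exists>A\<in>sets (PiM {..<m} (\<lambda>_. \<omega>) \<Otimes>\<^sub>M \<Xi>).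
     measure (PiM {..<m} (\<lambda>_. \<omega>) \<Otimes>\<^sub>M \<Xi>) A \<ge> 1 - \<gamma> \<and>
     (\<forall>(u, \<xi>)\<in>A. \<forall>\<sigma>>0.
        \<sigma>\<^sup>2 \<ge> \<alpha> / (2 * \<epsilon>) * ((\<Sum>l<m. (Dhat u \<xi> l)\<^sup>2) / real m
                              + \<Delta>0\<^sup>2 * sqrt (ln (4 / \<gamma>) / (2 * real m)))
        \<longrightarrow> ave_srpp \<alpha> \<epsilon> \<omega> MX Q Th (gauss_mech_law MX f \<sigma>))"
proof -
  let ?\<Omega> = "PiM {..<m} (\<lambda>_. \<omega>)"
  let ?P = "?\<Omega> \<Otimes>\<^sub>M \<Xi>"
  have thP: "prob_space \<theta> \<and> sets \<theta> = sets (count_space UNIV \<Otimes>\<^sub>M MX)" if "\<theta> \<in> Th" for \<theta>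
    using scen that by (auto simp: pufferfish_scenario_def)
  have om: "prob_space \<omega>" and sets_om[measurable_cong]: "sets \<omega> = sets borel"
    and om_sph: "emeasure \<omega> (sphere 0 1) = 1"
    using slice by (auto simp: slice_distribution_def)
  interpret om: prob_space \<omega> by fact
  interpret Om: prob_space ?\<Omega> by (rule prob_space_PiM) (use om in auto)
  interpret Xi: prob_space \<Xi> by fact
  interpret P: prob_space ?P by (rule prob_space_pair) unfold_locales
  define Dl where "Dl v = Delta_inf MX Q Th f v" for v
  have D0: "\<Delta>0 \<ge> 0"
  proof -
    obtain b :: "real^'d" where "b \<in> Basis" using nonempty_Basis by blast
    then have "b \<in> sphere 0 1" by (simp add: norm_Basis)
    then have "0 \<le> Dl b" "Dl b \<le> ereal \<Delta>0" using Delta_bd by (auto simp: Dl_def)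
    then show ?thesis by (cases "Dl b") auto
  qed
  define h0 where "h0 v = (if v \<in> sphere 0 1 then (real_of_ereal (Dl v))\<^sup>2 else 0)" for v
  have h0_bnd: "0 \<le> h0 v \<and> h0 v \<le> \<Delta>0\<^sup>2" for v
  proof (cases "v \<in> sphere 0 1")
    case True
    then have "0 \<le> Dl v" "Dl v \<le> ereal \<Delta>0" using Delta_bd by (auto simp: Dl_def)
    then show ?thesis using True delta_bounds[of "Dl v" \<Delta>0] by (simp add: h0_def)
  qed (use D0 in \<open>simp add: h0_def\<close>)
  obtain hh where hh: "hh \<in> borel_measurable \<omega>" "\<And>v. hh v \<le> ennreal (h0 v)"
    "integral\<^sup>N \<omega> hh = (\<integral>\<^sup>+v. ennreal (h0 v) \<partial>\<omega>)"
    using nn_minorant[of \<omega> "\<lambda>v. ennreal (h0 v)"] by blast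
  define hr where "hr v = enn2real (hh v)" for v
  have hr_meas[measurable]: "hr \<in> borel_measurable \<omega>" unfolding hr_def using hh(1) by measurable
  have hh_hr: "hh v = ennreal (hr v)" for v
  proof -
    have "hh v < top" using hh(2)[of v] by (simp add: le_less_trans)
    then show ?thesis by (simp add: hr_def)
  qed
  have hr_bnd: "0 \<le> hr v \<and> hr v \<le> h0 v" for v
  proof -
    have "hr v \<le> enn2real (ennreal (h0 v))" unfolding hr_def by (rule enn2real_mono[OF hh(2)]) simp
    then show ?thesis using h0_bnd[of v] by (simp add: hr_def)
  qed
  define Er where "Er = (\<integral>v. hr v \<partial>\<omega>)"
  have hr_int: "integrable \<omega> hr"
    by (rule om.integrable_const_bound[where B="\<Delta>0\<^sup>2"]) (use hr_bnd h0_bnd in \<open>auto intro: order.trans\<close>)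
  have E_eq: "(\<integral>\<^sup>+v. ennreal (h0 v) \<partial>\<omega>) = ennreal Er"
  proof -
    have "(\<integral>\<^sup>+v. ennreal (h0 v) \<partial>\<omega>) = (\<integral>\<^sup>+v. ennreal (hr v) \<partial>\<omega>)" using hh(3) hh_hr[abs_def] by (metis (no_types))
    also have "\<dots> = ennreal Er" unfolding Er_def
      using hr_int hr_bnd by (intro nn_integral_eq_integral) auto
    finally show ?thesis .
  qed
  have Er0: "Er \<ge> 0" unfolding Er_def using hr_bnd by (simp add: integral_nonneg)
  define t where "t = \<Delta>0\<^sup>2 * sqrt (ln (4 / \<gamma>) / (2 * real m))"
  have lg: "ln (4 / \<gamma>) \<ge> 0" using gam by simp
  have t0: "t \<ge> 0" unfolding t_def using lg by simp
  define Bd where "Bd = {u \<in> space ?\<Omega>. (\<Sum>l<m. hr (u l)) < real m * Er - real m * t}"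
  have Bd_meas: "Bd \<in> sets ?\<Omega>"
  proof -
    have [measurable]: "(\<lambda>u. (\<Sum>l<m. hr (u l))) \<in> borel_measurable ?\<Omega>"
      by (intro borel_measurable_sum) measurable
    show ?thesis unfolding Bd_def by measurable
  qed
  have Bd_le: "measure ?\<Omega> Bd \<le> \<gamma> / 4"
  proof (cases "\<Delta>0 = 0")
    case True
    then have hr0: "hr v = 0" for v using hr_bnd[of v] h0_bnd[of v] by simp
    have "Bd = {}" using True by (auto simp: Bd_def hr0 Er_def t_def)
    then show ?thesis using gam by simp
  next
    case False
    then have D0p: "\<Delta>0\<^sup>2 > 0" using D0 by simp
    have "measure ?\<Omega> Bd \<le> measure ?\<Omega> {u \<in> space ?\<Omega>. (\<Sum>l<m. hr (u l)) \<le> real m * (\<integral>x. hr x \<partial>\<omega>) - real m * t}"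
    proof (rule Om.finite_measure_mono)
      show "Bd \<subseteq> {u \<in> space ?\<Omega>. (\<Sum>l<m. hr (u l)) \<le> real m * (\<integral>x. hr x \<partial>\<omega>) - real m * t}"
        by (auto simp: Bd_def Er_def)
      have [measurable]: "(\<lambda>u. (\<Sum>l<m. hr (u l))) \<in> borel_measurable ?\<Omega>"
        by (intro borel_measurable_sum) measurable
      show "{u \<in> space ?\<Omega>. (\<Sum>l<m. hr (u l)) \<le> real m * (\<integral>x. hr x \<partial>\<omega>) - real m * t} \<in> sets ?\<Omega>"
        by measurable
    qed
    also have "\<dots> \<le> exp (-2 * real m * t\<^sup>2 / (\<Delta>0\<^sup>2)\<^sup>2)"
      by (rule hoeffding_prod[OF om hr_meas _ D0p m_pos t0]) (use hr_bnd h0_bnd in \<open>auto intro: order.trans\<close>)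
    also have "-2 * real m * t\<^sup>2 / (\<Delta>0\<^sup>2)\<^sup>2 = - ln (4 / \<gamma>)"
    proof -
      have "t\<^sup>2 = (\<Delta>0\<^sup>2)\<^sup>2 * (ln (4 / \<gamma>) / (2 * real m))"
        unfolding t_def using lg by (simp add: power_mult_distrib)
      then show ?thesis using D0p m_pos by (simp add: field_simps)
    qed
    also have "exp (- ln (4 / \<gamma>)) = \<gamma> / 4" using gam by (simp add: exp_minus)
    finally show ?thesis .
  qed
  define S where "S x = (\<Sum>l<m. (Dhat (fst x) (snd x) l)\<^sup>2) / real m" for x
  have S_meas[measurable]: "S \<in> borel_measurable ?P"
  proof -
    have "(\<lambda>x. Dhat (fst x) (snd x) l) \<in> borel_measurable ?P" if "l < m" for l
      using Dhat_meas that by (simp add: split_beta')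
    then show ?thesis unfolding S_def
      by (intro borel_measurable_divide borel_measurable_sum borel_measurable_power) auto
  qed
  define A where "A = {x \<in> space ?P. Er - t \<le> S x}"
  have A_meas: "A \<in> sets ?P" unfolding A_def by measurable
  have cover_imp: "Er - t \<le> S (u, \<xi>)"
    if u: "u \<in> space ?\<Omega>" "u \<notin> Bd" and cov: "\<forall>l<m. Dl (u l) \<le> ereal (Dhat u \<xi> l)" for u \<xi>
  proof -
    have "hr (u l) \<le> (Dhat u \<xi> l)\<^sup>2" if l: "l < m" for l
    proof -
      have "h0 (u l) \<le> (Dhat u \<xi> l)\<^sup>2"
      proof (cases "u l \<in> sphere 0 1")
        case True
        then have "0 \<le> Dl (u l)" "Dl (u l) \<le> ereal \<Delta>0" using Delta_bd by (auto simp: Dl_def)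
        then show ?thesis using True h0_le_sq(1)[of "Dl (u l)" \<Delta>0 "Dhat u \<xi> l"] cov l by (simp add: h0_def)
      qed (simp add: h0_def)
      then show ?thesis using hr_bnd[of "u l"] by simp
    qed
    then have "(\<Sum>l<m. hr (u l)) \<le> (\<Sum>l<m. (Dhat u \<xi> l)\<^sup>2)" by (intro sum_mono) auto
    moreover have "real m * Er - real m * t \<le> (\<Sum>l<m. hr (u l))" using u by (auto simp: Bd_def)
    ultimately have "real m * (Er - t) \<le> (\<Sum>l<m. (Dhat u \<xi> l)\<^sup>2)" by (simp add: algebra_simps)
    then show ?thesis using m_pos by (simp add: S_def field_simps)
  qed
  have prob_A: "measure ?P A \<ge> 1 - \<gamma>"
  proof -
    have compl_meas: "space ?P - A \<in> sets ?P" using A_meas by auto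
    have "emeasure ?P (space ?P - A) = (\<integral>\<^sup>+u. emeasure \<Xi> (Pair u -` (space ?P - A)) \<partial>?\<Omega>)"
      by (rule Xi.emeasure_pair_measure_alt[OF compl_meas])
    also have "\<dots> \<le> (\<integral>\<^sup>+u. ennreal (\<gamma>/2) + indicator Bd u \<partial>?\<Omega>)"
    proof (rule nn_integral_mono_AE)
      have "AE u in ?\<Omega>. u \<in> space ?\<Omega> \<and> (\<exists>A\<in>sets \<Xi>. measure \<Xi> A \<ge> 1 - \<gamma> / 2 \<and>
          (\<forall>\<xi>\<in>A. \<forall>l<m. Delta_inf MX Q Th f (u l) \<le> ereal (Dhat u \<xi> l)))"
        using Dhat_cover AE_space by eventually_elim auto
      then show "AE u in ?\<Omega>. emeasure \<Xi> (Pair u -` (space ?P - A)) \<le> ennreal (\<gamma>/2) + indicator Bd u"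
      proof (rule eventually_mono, elim conjE bexE)
        fix u Au assume u: "u \<in> space ?\<Omega>" and Au: "Au \<in> sets \<Xi>" "measure \<Xi> Au \<ge> 1 - \<gamma> / 2"
          and cov: "\<forall>\<xi>\<in>Au. \<forall>l<m. Delta_inf MX Q Th f (u l) \<le> ereal (Dhat u \<xi> l)"
        show "emeasure \<Xi> (Pair u -` (space ?P - A)) \<le> ennreal (\<gamma>/2) + indicator Bd u"
        proof (cases "u \<in> Bd")
          case True
          have "emeasure \<Xi> (Pair u -` (space ?P - A)) \<le> 1" by (rule Xi.emeasure_le_1)
          then show ?thesis using True by (simp add: add_increasing)
        next
          case False
          have sub: "Pair u -` (space ?P - A) \<subseteq> space \<Xi> - Au"
          proof
            fix \<xi> assume \<xi>: "\<xi> \<in> Pair u -` (space ?P - A)"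
            then have \<xi>s: "\<xi> \<in> space \<Xi>" and nA: "\<not> Er - t \<le> S (u, \<xi>)"
              using u by (auto simp: A_def space_pair_measure)
            have "\<xi> \<notin> Au"
            proof
              assume "\<xi> \<in> Au"
              then have "\<forall>l<m. Dl (u l) \<le> ereal (Dhat u \<xi> l)" using cov by (simp add: Dl_def)
              then show False using cover_imp[OF u False] nA by blast
            qed
            then show "\<xi> \<in> space \<Xi> - Au" using \<xi>s by simp
          qed
          have "emeasure \<Xi> (Pair u -` (space ?P - A)) \<le> emeasure \<Xi> (space \<Xi> - Au)"
            using Au(1) by (intro emeasure_mono sub) auto
          also have "\<dots> = ennreal (1 - measure \<Xi> Au)"
            using Au(1) by (simp add: Xi.emeasure_eq_measure Xi.prob_compl)
          also have "\<dots> \<le> ennreal (\<gamma>/2)" using Au(2) by (intro ennreal_leI) simp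
          finally show ?thesis by (simp add: False)
        qed
      qed
    qed
    also have "\<dots> = ennreal (\<gamma>/2) + emeasure ?\<Omega> Bd"
      using Bd_meas by (subst nn_integral_add) (auto simp: Om.emeasure_space_1)
    also have "\<dots> \<le> ennreal (\<gamma>/2) + ennreal (\<gamma>/4)"
      using Bd_le by (intro add_left_mono) (simp add: Om.emeasure_eq_measure ennreal_leI del: ennreal_le_iff)
    also have "\<dots> = ennreal (3/4 * \<gamma>)" using gam by (simp add: ennreal_plus[symmetric] del: ennreal_plus)
    finally have "emeasure ?P (space ?P - A) \<le> ennreal (3/4 * \<gamma>)" .
    then have "measure ?P (space ?P - A) \<le> 3/4 * \<gamma>"
      using gam by (simp add: P.emeasure_eq_measure)
    then show ?thesis using P.prob_compl[OF A_meas] gam by simp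
  qed
  have AE_sph: "AE v in \<omega>. v \<in> sphere 0 1"
    by (rule om.AE_prob_1) (use om_sph in \<open>simp add: om.emeasure_eq_measure\<close>)
  have priv: "ave_srpp \<alpha> \<epsilon> \<omega> MX Q Th (gauss_mech_law MX f \<sigma>)"
    if xA: "x \<in> A" and sig: "\<sigma> > 0"
    and hyp: "\<sigma>\<^sup>2 \<ge> \<alpha> / (2 * \<epsilon>) * (S x + t)" for x \<sigma>
  proof -
    define c where "c = \<alpha> / (2 * \<sigma>\<^sup>2)"
    have c0: "c \<ge> 0" using alpha sig by (simp add: c_def)
    have ErS: "Er \<le> S x + t" using xA by (simp add: A_def)
    have cE: "c * Er \<le> \<epsilon>"
    proof -
      have "c * Er \<le> c * (S x + t)" using ErS c0 by (rule mult_left_mono)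
      also have "\<dots> \<le> \<epsilon>"
      proof -
        have "\<alpha> * (S x + t) \<le> 2 * \<epsilon> * \<sigma>\<^sup>2" using hyp eps by (simp add: field_simps)
        then show ?thesis using sig by (simp add: c_def field_simps)
      qed
      finally show ?thesis .
    qed
    show ?thesis unfolding ave_srpp_def
    proof (intro ballI impI, clarify)
      fix \<theta> si sj assume th: "\<theta> \<in> Th" and q: "(si, sj) \<in> Q"
        and pi: "sec_prob MX \<theta> si > 0" and pj: "sec_prob MX \<theta> sj > 0"
      have "ave_sd \<alpha> \<omega> (gauss_mech_law MX f \<sigma> \<theta> si) (gauss_mech_law MX f \<sigma> \<theta> sj)
          \<le> (\<integral>\<^sup>+v. ennreal c * ennreal (h0 v) \<partial>\<omega>)"
        unfolding ave_sd_def
      proof (rule nn_integral_mono_AE)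
        show "AE v in \<omega>. renyi_div \<alpha> (proj v (gauss_mech_law MX f \<sigma> \<theta> si)) (proj v (gauss_mech_law MX f \<sigma> \<theta> sj))
             \<le> ennreal c * ennreal (h0 v)"
          using AE_sph
        proof (rule eventually_mono)
          fix v :: "real^'d" assume v: "v \<in> sphere 0 1"
          then have b: "0 \<le> Dl v" "Dl v \<le> ereal \<Delta>0" using Delta_bd by (auto simp: Dl_def)
          define D where "D = real_of_ereal (Dl v)"
          have DD: "Dl v = ereal D" "D \<ge> 0" using delta_bounds[OF b] by (auto simp: D_def)
          have W: "W_inf (proj v (query_law MX \<theta> f si)) (proj v (query_law MX \<theta> f sj)) \<le> ereal D"
          proof -
            have "W_inf (proj v (query_law MX \<theta> f si)) (proj v (query_law MX \<theta> f sj)) \<le> Dl v"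
              unfolding Dl_def Delta_inf_def
              by (rule SUP_upper2[of "(si, sj, \<theta>)"]) (use th q pi pj in auto)
            then show ?thesis using DD by simp
          qed
          have "renyi_div \<alpha> (proj v (gauss_mech_law MX f \<sigma> \<theta> si)) (proj v (gauss_mech_law MX f \<sigma> \<theta> sj))
              \<le> ennreal (\<alpha> * D\<^sup>2 / (2*\<sigma>\<^sup>2))"
            using thP[OF th] by (intro renyi_u_bound[OF _ _ pi pj f_meas sig _ alpha W DD(2)])
              (use v in auto)
          also have "\<alpha> * D\<^sup>2 / (2*\<sigma>\<^sup>2) = c * h0 v" using v by (simp add: c_def h0_def D_def)
          also have "ennreal (c * h0 v) = ennreal c * ennreal (h0 v)" using c0 h0_bnd[of v] by (simp add: ennreal_mult)
          finally show "renyi_div \<alpha> (proj v (gauss_mech_law MX f \<sigma> \<theta> si)) (proj v (gauss_mech_law MX f \<sigma> \<theta> sj))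
             \<le> ennreal c * ennreal (h0 v)" .
        qed
      qed
      also have "\<dots> \<le> ennreal c * (\<integral>\<^sup>+v. ennreal (h0 v) \<partial>\<omega>)" by (rule nn_integral_cmult_le[OF c0])
      also have "\<dots> = ennreal (c * Er)" using c0 Er0 by (simp add: E_eq ennreal_mult)
      also have "\<dots> \<le> ennreal \<epsilon>" using cE by (rule ennreal_leI)
      finally show "ave_sd \<alpha> \<omega> (gauss_mech_law MX f \<sigma> \<theta> si) (gauss_mech_law MX f \<sigma> \<theta> sj) \<le> ennreal \<epsilon>" .
    qed
  qed
  show ?thesis
  proof (intro bexI[of _ A] conjI)
    show "A \<in> sets ?P" by (rule A_meas)
    show "1 - \<gamma> \<le> measure ?P A" by (rule prob_A)
    show "\<forall>(u, \<xi>)\<in>A. \<forall>\<sigma>>0. \<sigma>\<^sup>2 \<ge> \<alpha> / (2 * \<epsilon>) * ((\<Sum>l<m. (Dhat u \<xi> l)\<^sup>2) / real m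
                              + \<Delta>0\<^sup>2 * sqrt (ln (4 / \<gamma>) / (2 * real m)))
        \<longrightarrow> ave_srpp \<alpha> \<epsilon> \<omega> MX Q Th (gauss_mech_law MX f \<sigma>)"
    proof (clarify)
      fix u \<xi> \<sigma> assume "(u, \<xi>) \<in> A" "\<sigma> > (0::real)"
        and "\<sigma>\<^sup>2 \<ge> \<alpha> / (2 * \<epsilon>) * ((\<Sum>l<m. (Dhat u \<xi> l)\<^sup>2) / real m + \<Delta>0\<^sup>2 * sqrt (ln (4 / \<gamma>) / (2 * real m)))"
      then show "ave_srpp \<alpha> \<epsilon> \<omega> MX Q Th (gauss_mech_law MX f \<sigma>)"
        by (intro priv[of "(u, \<xi>)"]) (auto simp: S_def t_def)
    qed
  qed
qed

end
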